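(* Let $M \in \{0,1\}^{n \times n}$ be a $d$-mixed-free binary matrix. Then $M$ admits a rectangle-decomposition $\mathcal{R}$ with $|\mathcal{R}| \in 2^{\mathcal{O}(d)} \cdot n$.
   Context: A $k$-division of $M$ is a pair $(\mathcal{R},\mathscr{C})$ of partitions of $[n]$ each into exactly $k$ contiguous non-empty intervals; its cells are the submatrices with rows in one interval of $\mathcal{R}$ and columns in one interval of $\mathscr{C}$. A matrix is mixed if it is neither horizontal (all its rows are equal) nor vertical (all its columns are equal). $M$ is $d$-mixed-free if it admits no $d$-division all of whose cells are mixed. A $1$-rectangle of $M$ is a contiguous submatrix all of whose entries are $1$; a rectangle-decomposition of $M$ is a collection of pairwise disjoint $1$-rectangles whose union is exactly the set of positions of $1$-entries of $M$. *)

theory Defs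
  imports Main
begin

text \<open>Binary n x n matrices are modelled as M :: nat => nat => bool, with rows and
columns indexed by {0..<n}; True means entry 1. Entries outside the index range
are irrelevant.\<close>

text \<open>A partition of {0..<n} into exactly k contiguous non-empty intervals, given by
its strictly increasing boundary sequence b 0 = 0 < b 1 < ... < b k = n;
the i-th interval (i < k) is {b i..<b (Suc i)}.\<close>
definition interval_partition :: "nat \<Rightarrow> nat \<Rightarrow> (nat \<Rightarrow> nat) \<Rightarrow> bool" where
  "interval_partition n k b \<longleftrightarrow> b 0 = 0 \<and> b k = n \<and> (\<forall>i<k. b i < b (Suc i))"

definition horizontal :: "(nat \<Rightarrow> nat \<Rightarrow> bool) \<Rightarrow> nat set \<Rightarrow> nat set \<Rightarrow> bool" where
  "horizontal M I J \<longleftrightarrow> (\<forall>r\<in>I. \<forall>r'\<in>I. \<forall>c\<in>J. M r c = M r' c)"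

definition vertical :: "(nat \<Rightarrow> nat \<Rightarrow> bool) \<Rightarrow> nat set \<Rightarrow> nat set \<Rightarrow> bool" where
  "vertical M I J \<longleftrightarrow> (\<forall>c\<in>J. \<forall>c'\<in>J. \<forall>r\<in>I. M r c = M r c')"

definition mixed :: "(nat \<Rightarrow> nat \<Rightarrow> bool) \<Rightarrow> nat set \<Rightarrow> nat set \<Rightarrow> bool" where
  "mixed M I J \<longleftrightarrow> \<not> horizontal M I J \<and> \<not> vertical M I J"

definition mixed_free :: "nat \<Rightarrow> nat \<Rightarrow> (nat \<Rightarrow> nat \<Rightarrow> bool) \<Rightarrow> bool" where
  "mixed_free n d M \<longleftrightarrow>
     \<not> (\<exists>br bc. interval_partition n d br \<and> interval_partition n d bc \<and>
          (\<forall>i<d. \<forall>j<d. mixed M {br i..<br (Suc i)} {bc j..<bc (Suc j)}))"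

definition one_rectangle :: "nat \<Rightarrow> (nat \<Rightarrow> nat \<Rightarrow> bool) \<Rightarrow> (nat \<times> nat) set \<Rightarrow> bool" where
  "one_rectangle n M S \<longleftrightarrow>
     (\<exists>a b c e. a < b \<and> b \<le> n \<and> c < e \<and> e \<le> n \<and> S = {a..<b} \<times> {c..<e}) \<and>
     (\<forall>(i, j)\<in>S. M i j)"

definition ones :: "nat \<Rightarrow> (nat \<Rightarrow> nat \<Rightarrow> bool) \<Rightarrow> (nat \<times> nat) set" where
  "ones n M = {(i, j). i < n \<and> j < n \<and> M i j}"

definition rectangle_decomposition ::
  "nat \<Rightarrow> (nat \<Rightarrow> nat \<Rightarrow> bool) \<Rightarrow> (nat \<times> nat) set set \<Rightarrow> bool" where
  "rectangle_decomposition n M R \<longleftrightarrow>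
     finite R \<and> (\<forall>S\<in>R. one_rectangle n M S) \<and> pairwise disjnt R \<and> \<Union>R = ones n M"

end

theory Submission
  imports Defs
begin


datatype dt = Lf | On bool dt | Tw dt dt

fun sz :: "dt \<Rightarrow> nat" where
  "sz Lf = 1" | "sz (On b t) = Suc (sz t)" | "sz (Tw a c) = Suc (sz a + sz c)"
fun tw :: "dt \<Rightarrow> nat" where
  "tw Lf = 0" | "tw (On b t) = tw t" | "tw (Tw a c) = Suc (tw a + tw c)"
fun onn :: "dt \<Rightarrow> nat" where
  "onn Lf = 0" | "onn (On b t) = Suc (onn t)" | "onn (Tw a c) = onn a + onn c"

fun vd :: "nat set \<Rightarrow> dt \<Rightarrow> nat \<Rightarrow> nat \<Rightarrow> bool" where
  "vd S Lf x h = (\<exists>s\<in>S. x \<le> s \<and> s < x + 2^h)"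
| "vd S (On b t) x h = (0 < h \<and> vd S t (if b then x + 2^(h-1) else x) (h-1))"
| "vd S (Tw t1 t2) x h = (0 < h \<and> vd S t1 x (h-1) \<and> vd S t2 (x + 2^(h-1)) (h-1))"

fun cl :: "dt \<Rightarrow> nat \<Rightarrow> nat \<Rightarrow> nat list" where
  "cl Lf x h = []"
| "cl (On b t) x h = cl t (if b then x + 2^(h-1) else x) (h-1)"
| "cl (Tw t1 t2) x h = cl t1 x (h-1) @ [x + 2^(h-1)] @ cl t2 (x + 2^(h-1)) (h-1)"

lemma length_cl: "length (cl t x h) = tw t"
  by (induction t arbitrary: x h) auto

lemma sz_eq: "sz t = 2 * tw t + onn t + 1"
  by (induction t) auto

fun goodr :: "nat set \<Rightarrow> nat list \<Rightarrow> bool" where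
  "goodr S (a # b # l) = ((\<exists>s\<in>S. a \<le> s \<and> s < b) \<and> goodr S (b # l))"
| "goodr S _ = True"

lemma goodr_app: "goodr S (a # l1 @ [m]) \<Longrightarrow> goodr S (m # l2) \<Longrightarrow> goodr S (a # l1 @ m # l2)"
  by (induction l1 arbitrary: a) auto

lemma goodr_first: "goodr S (a # l) \<Longrightarrow> a' \<le> a \<Longrightarrow> goodr S (a' # l)"
  by (cases l) (auto, meson le_trans)

lemma goodr_last: "goodr S (a # l @ [b]) \<Longrightarrow> b \<le> b' \<Longrightarrow> goodr S (a # l @ [b'])"
proof (induction l arbitrary: a)
  case Nil then show ?case by auto
next
  case (Cons c l) then show ?case by auto
qed

lemma goodr_less: "goodr S (a # l) \<Longrightarrow> x \<in> set l \<Longrightarrow> a < x"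
proof (induction l arbitrary: a)
  case Nil then show ?case by simp
next
  case (Cons c l)
  then have "a < c" by auto
  moreover have "goodr S (c # l)" using Cons.prems by simp
  ultimately show ?case using Cons by fastforce
qed

lemma goodr_take: "goodr S (a # l @ [z]) \<Longrightarrow> goodr S (a # take j l @ [z])"
proof (induction l arbitrary: a j)
  case Nil then show ?case by simp
next
  case (Cons c l)
  have g2: "goodr S (c # l @ [z])" using Cons.prems by simp
  have cz: "c < z" using goodr_less[OF g2, of z] by simp
  show ?case
  proof (cases j)
    case 0
    then show ?thesis using Cons.prems cz by auto
  next
    case (Suc j')
    then show ?thesis using Cons.prems Cons.IH[OF g2, of j'] by auto
  qed
qed

lemma goodr_nth: "goodr S l \<Longrightarrow> Suc i < length l \<Longrightarrow> \<exists>s\<in>S. l!i \<le> s \<and> s < l ! Suc i"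
proof (induction S l arbitrary: i rule: goodr.induct)
  case (1 S a b l)
  then show ?case by (cases i) auto
qed auto

lemma vd_good: "vd S t x h \<Longrightarrow> goodr S (x # cl t x h @ [x + 2^h])"
proof (induction t arbitrary: x h)
  case Lf
  then show ?case by auto
next
  case (On b t)
  then obtain h' where h: "h = Suc h'" by (cases h) auto
  let ?x = "if b then x + 2^h' else x"
  have "vd S t ?x h'" using On.prems unfolding h by (cases b) auto
  then have "goodr S (?x # cl t ?x h' @ [?x + 2^h'])" by (rule On.IH)
  then have "goodr S (?x # cl t ?x h' @ [x + 2^h])"
    by (rule goodr_last) (auto simp: h)
  then have "goodr S (x # cl t ?x h' @ [x + 2^h])"
    by (rule goodr_first) auto
  then show ?case using h by (cases b) simp_all
next
  case (Tw t1 t2)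
  then obtain h' where h: "h = Suc h'" by (cases h) auto
  have g1: "goodr S (x # cl t1 x h' @ [x + 2^h'])" using Tw h by simp
  have g2: "goodr S ((x + 2^h') # cl t2 (x + 2^h') h' @ [x + 2^h' + 2^h'])" using Tw h by simp
  have "goodr S (x # cl t1 x h' @ (x + 2^h') # (cl t2 (x + 2^h') h' @ [x + 2^h' + 2^h']))"
    using goodr_app[OF g1] g2 by simp
  then show ?case using h by (simp add: mult_2 add.assoc)
qed

lemma cube_ineq_aux: "((a::nat) + (a + c))^3 \<le> 4 * (a^3 + (a+c)^3)"
  by (simp add: power3_eq_cube algebra_simps)

lemma cube_ineq: "((a::nat) + b)^3 \<le> 4 * (a^3 + b^3)"
proof (cases "a \<le> b")
  case True
  then obtain c where "b = a + c" using le_Suc_ex by blast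
  then show ?thesis using cube_ineq_aux by simp
next
  case False
  then obtain c where "a = b + c" using le_Suc_ex[of b a] by auto
  then show ?thesis using cube_ineq_aux[of b c] by (simp add: add.commute)
qed

lemma pow_sum_le: "(2::nat)^a + 2^b \<le> 2^(a+b+1)"
proof -
  have "(2::nat)^a \<le> 2^(a+b)" "(2::nat)^b \<le> 2^(a+b)" by (auto intro: power_increasing)
  moreover have "(2::nat)^(a+b+1) = 2^(a+b) + 2^(a+b)" by simp
  ultimately show ?thesis by linarith
qed

lemma card_split:
  "card ((S::nat set) \<inter> {x..<x + 2^(Suc h)}) = card (S \<inter> {x..<x+2^h}) + card (S \<inter> {x+2^h..<x+2^h+2^h})"
proof -
  have "S \<inter> {x..<x + 2^(Suc h)} = (S \<inter> {x..<x+2^h}) \<union> (S \<inter> {x+2^h..<x+2^h+2^h})"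
    by auto
  moreover have "(S \<inter> {x..<x+2^h}) \<inter> (S \<inter> {x+2^h..<x+2^h+2^h}) = {}" by auto
  ultimately show ?thesis by (simp add: card_Un_disjoint)
qed

lemma vd_Lf_iff: "vd S Lf x h \<longleftrightarrow> 1 \<le> card (S \<inter> {x..<x+2^h})"
proof -
  have "vd S Lf x h \<longleftrightarrow> S \<inter> {x..<x+2^h} \<noteq> {}" by auto
  also have "\<dots> \<longleftrightarrow> 1 \<le> card (S \<inter> {x..<x+2^h})"
    by (metis One_nat_def Suc_leI card_gt_0_iff finite_Int finite_atLeastLessThan
        not_one_le_zero card.empty)
  finally show ?thesis .
qed

definition Succ :: "nat \<Rightarrow> nat set \<Rightarrow> nat \<Rightarrow> nat \<Rightarrow> bool" where
  "Succ k S x h = (\<exists>t. vd S t x h \<and> k \<le> tw t + 1 \<and> sz t \<le> h + 8*k)"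

definition Pot :: "nat \<Rightarrow> nat set \<Rightarrow> nat \<Rightarrow> nat \<Rightarrow> bool" where
  "Pot k S x h = (\<exists>t. vd S t x h \<and> tw t + 2 \<le> k \<and> onn t \<le> 2 * tw t \<and>
        card (S \<inter> {x..<x+2^h})^3 \<le> 2^h * 2^(2*tw t - onn t))"

lemma Succ_lift:
  assumes "Succ k S (if b then x + 2^h else x) h"
  shows "Succ k S x (Suc h)"
proof -
  obtain t where t: "vd S t (if b then x + 2^h else x) h" "k \<le> tw t + 1" "sz t \<le> h + 8*k"
    using assms unfolding Succ_def by blast
  have "vd S (On b t) x (Suc h)" using t(1) by (cases b) auto
  then show ?thesis unfolding Succ_def using t
    by (intro exI[of _ "On b t"]) auto
qed

lemma Pot_lift:
  assumes P: "Pot k S (if b then x + 2^h else x) h"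
    and eq: "card (S \<inter> {x..<x+2^Suc h}) = card (S \<inter> {(if b then x + 2^h else x)..<(if b then x + 2^h else x)+2^h})"
    and pos: "1 \<le> card (S \<inter> {x..<x+2^Suc h})"
  shows "Pot k S x (Suc h)"
proof -
  let ?y = "if b then x + 2^h else x"
  obtain t where t: "vd S t ?y h" "tw t + 2 \<le> k" "onn t \<le> 2 * tw t"
    "card (S \<inter> {?y..<?y+2^h})^3 \<le> 2^h * 2^(2*tw t - onn t)"
    using P unfolding Pot_def by blast
  show ?thesis
  proof (cases "onn t < 2 * tw t")
    case True
    have v: "vd S (On b t) x (Suc h)" using t(1) by (cases b) auto
    have e: "2 * tw t - onn t = Suc (2 * tw (On b t) - onn (On b t))" using True by simp
    have "card (S \<inter> {x..<x+2^Suc h})^3 \<le> 2^h * 2^(2*tw t - onn t)" using t(4) eq by simp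
    also have "\<dots> = 2^(Suc h) * 2^(2 * tw (On b t) - onn (On b t))" unfolding e by simp
    finally show ?thesis unfolding Pot_def using v t(2) True
      by (intro exI[of _ "On b t"]) auto
  next
    case False
    have v: "vd S Lf x (Suc h)" using pos vd_Lf_iff by blast
    have "card (S \<inter> {x..<x+2^Suc h})^3 \<le> 2^h * 2^(2*tw t - onn t)" using t(4) eq by simp
    also have "\<dots> = 2^h" using False t(3) by simp
    also have "\<dots> \<le> 2^(Suc h) * 2^(2 * tw Lf - onn Lf)" by simp
    finally show ?thesis unfolding Pot_def using v t(2)
      by (intro exI[of _ Lf]) auto
  qed
qed

lemma cover_main:
  assumes k: "1 \<le> k"
  shows "1 \<le> card (S \<inter> {x..<x+2^h}) \<Longrightarrow> Succ k S x h \<or> Pot k S x h"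
proof (induction h arbitrary: x)
  case 0
  have v: "vd S Lf x 0" using 0 vd_Lf_iff by blast
  have "S \<inter> {x..<x+2^0} \<subseteq> {x}" by auto
  then have "card (S \<inter> {x..<x+2^0}) \<le> 1"
    by (metis card.empty card.insert card_mono empty_iff finite.intros(1) finite_insert le_numeral_extra(4) One_nat_def)
  then have c1: "card (S \<inter> {x..<x+2^0}) = 1" using 0 le_antisym by blast
  then have c1': "card (S \<inter> {x..<x+2^0})^3 \<le> 2^0 * 2^(2*tw Lf - onn Lf)" by simp
  show ?case
  proof (cases "k \<le> 1")
    case True
    then show ?thesis unfolding Succ_def using v k by (intro disjI1 exI[of _ Lf]) auto
  next
    case False
    then show ?thesis unfolding Pot_def using v c1' by (intro disjI2 exI[of _ Lf]) auto
  qed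
next
  case (Suc h)
  define a1 where "a1 = card (S \<inter> {x..<x+2^h})"
  define a2 where "a2 = card (S \<inter> {x+2^h..<x+2^h+2^h})"
  have asp: "card (S \<inter> {x..<x+2^Suc h}) = a1 + a2" unfolding a1_def a2_def by (rule card_split)
  show ?case
  proof (cases "a1 = 0")
    case True
    then have pos2: "1 \<le> a2" using Suc.prems asp by simp
    have "Succ k S (x+2^h) h \<or> Pot k S (x+2^h) h" using Suc.IH[of "x+2^h"] pos2 a2_def by simp
    then show ?thesis
    proof
      assume "Succ k S (x+2^h) h"
      then show ?thesis using Succ_lift[of k S True x h] by simp
    next
      assume "Pot k S (x+2^h) h"
      then show ?thesis using Pot_lift[of k S True x h] Suc.prems asp True a2_def by simp
    qed
  next
    case False
    note a1pos = False
    show ?thesis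
    proof (cases "a2 = 0")
      case True
      have pos1: "1 \<le> a1" using a1pos by simp
      have "Succ k S x h \<or> Pot k S x h" using Suc.IH[of x] pos1 a1_def by simp
      then show ?thesis
      proof
        assume "Succ k S x h"
        then show ?thesis using Succ_lift[of k S False x h] by simp
      next
        assume "Pot k S x h"
        then show ?thesis using Pot_lift[of k S False x h] Suc.prems asp True a1_def by simp
      qed
    next
      case False
      have pos1: "1 \<le> a1" using a1pos by simp
      have pos2: "1 \<le> a2" using False by simp
      have I1: "Succ k S x h \<or> Pot k S x h" using Suc.IH[of x] pos1 a1_def by simp
      have I2: "Succ k S (x+2^h) h \<or> Pot k S (x+2^h) h" using Suc.IH[of "x+2^h"] pos2 a2_def by simp
      show ?thesis
      proof (cases "Succ k S x h \<or> Succ k S (x+2^h) h")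
        case True
        then show ?thesis using Succ_lift[of k S False x h] Succ_lift[of k S True x h] by auto
      next
        case False
        then have P1: "Pot k S x h" and P2: "Pot k S (x+2^h) h" using I1 I2 by auto
        obtain t1 where t1: "vd S t1 x h" "tw t1 + 2 \<le> k" "onn t1 \<le> 2 * tw t1"
          "a1^3 \<le> 2^h * 2^(2*tw t1 - onn t1)"
          using P1 unfolding Pot_def a1_def by blast
        obtain t2 where t2: "vd S t2 (x+2^h) h" "tw t2 + 2 \<le> k" "onn t2 \<le> 2 * tw t2"
          "a2^3 \<le> 2^h * 2^(2*tw t2 - onn t2)"
          using P2 unfolding Pot_def a2_def by blast
        have v: "vd S (Tw t1 t2) x (Suc h)" using t1(1) t2(1) by simp
        show ?thesis
        proof (cases "tw t1 + tw t2 + 3 \<le> k")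
          case True
          define v1 where "v1 = 2*tw t1 - onn t1"
          define v2 where "v2 = 2*tw t2 - onn t2"
          have ev: "2 * tw (Tw t1 t2) - onn (Tw t1 t2) = v1 + v2 + 2"
            using t1(3) t2(3) unfolding v1_def v2_def by simp
          have "card (S \<inter> {x..<x+2^Suc h})^3 = (a1 + a2)^3" using asp by simp
          also have "\<dots> \<le> 4 * (a1^3 + a2^3)" by (rule cube_ineq)
          also have "\<dots> \<le> 4 * (2^h * 2^v1 + 2^h * 2^v2)"
            using t1(4) t2(4) unfolding v1_def v2_def by simp
          also have "\<dots> = 4 * 2^h * (2^v1 + 2^v2)" by (simp add: algebra_simps)
          also have "\<dots> \<le> 4 * 2^h * 2^(v1+v2+1)" using pow_sum_le[of v1 v2] by simp
          also have "\<dots> = 2^(Suc h) * 2^(v1+v2+2)" by (simp add: power_add)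
          finally have "card (S \<inter> {x..<x+2^Suc h})^3 \<le> 2^(Suc h) * 2^(2 * tw (Tw t1 t2) - onn (Tw t1 t2))"
            using ev by simp
          then show ?thesis unfolding Pot_def using v True t1(3) t2(3)
            by (intro disjI2 exI[of _ "Tw t1 t2"]) auto
        next
          case False
          have "sz (Tw t1 t2) \<le> Suc h + 8 * k"
            using sz_eq[of t1] sz_eq[of t2] t1(2,3) t2(2,3) by simp
          then show ?thesis unfolding Succ_def using v False
            by (intro disjI1 exI[of _ "Tw t1 t2"]) auto
        qed
      qed
    qed
  qed
qed



fun enc :: "dt \<Rightarrow> nat list" where
  "enc Lf = [0]"
| "enc (On b t) = (if b then 1 else 2) # enc t"
| "enc (Tw a c) = 3 # enc a @ enc c"

lemma enc_prefix: "enc t @ r = enc t' @ r' \<Longrightarrow> t = t' \<and> r = r'"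
proof (induction t arbitrary: t' r r')
  case Lf
  then show ?case by (cases t') (auto split: if_splits)
next
  case (On b t)
  show ?case
  proof (cases t')
    case Lf then show ?thesis using On.prems by (cases b) auto
  next
    case (On b' t'')
    then show ?thesis using On.prems On.IH by (cases b; cases b') auto
  next
    case (Tw a' c') then show ?thesis using On.prems by (cases b) auto
  qed
next
  case (Tw a c)
  show ?case
  proof (cases t')
    case Lf then show ?thesis using Tw.prems by simp
  next
    case (On b t'') then show ?thesis using Tw.prems by (cases b) auto
  next
    case (Tw a' c')
    have "enc a @ (enc c @ r) = enc a' @ (enc c' @ r')" using Tw.prems \<open>t' = Tw a' c'\<close> by simp
    then have 1: "a = a'" and 2: "enc c @ r = enc c' @ r'" using Tw.IH(1) by blast+
    from Tw.IH(2)[OF 2] 1 \<open>t' = Tw a' c'\<close> show ?thesis by simp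
  qed
qed
lemma inj_enc: "inj enc"
  by (rule injI) (use enc_prefix[where r = "[]" and r' = "[]"] in simp)

lemma length_enc: "length (enc t) = sz t"
  by (induction t) auto

lemma set_enc: "set (enc t) \<subseteq> {0..<4}"
  by (induction t) auto

lemma geom4: "(\<Sum>i\<le>n. (4::nat)^i) \<le> 4^(Suc n)"
  by (induction n) auto

lemma card_trees: "finite {t. sz t \<le> n} \<and> card {t. sz t \<le> n} \<le> 4^(Suc n)"
proof -
  let ?L = "{xs. set xs \<subseteq> {0..<4::nat} \<and> length xs \<le> n}"
  have sub: "enc ` {t. sz t \<le> n} \<subseteq> ?L" using length_enc set_enc by auto
  have fL: "finite ?L" by (rule finite_lists_length_le) simp
  have cL: "card ?L = (\<Sum>i\<le>n. 4^i)" using card_lists_length_le[of "{0..<4::nat}" n] by simp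
  have fin: "finite (enc ` {t. sz t \<le> n})" using finite_subset[OF sub fL] .
  have inj: "inj_on enc {t. sz t \<le> n}" using inj_enc by (simp add: inj_on_def inj_def)
  have f: "finite {t. sz t \<le> n}" using fin inj finite_imageD by blast
  have "card {t. sz t \<le> n} = card (enc ` {t. sz t \<le> n})" using card_image[OF inj] by simp
  also have "\<dots> \<le> card ?L" by (rule card_mono[OF fL sub])
  also have "\<dots> \<le> 4^(Suc n)" using cL geom4 by simp
  finally show ?thesis using f by simp
qed


definition Fam :: "nat \<Rightarrow> nat list set" where
  "Fam k = (\<lambda>t. take (k-1) (cl t 0 (4*k+4))) ` {t. sz t \<le> 12*k+4}"

lemma Fam_card: "finite (Fam k) \<and> card (Fam k) \<le> 4^(12*k+5)"
proof -
  have f: "finite {t. sz t \<le> 12*k+4}" and c: "card {t. sz t \<le> 12*k+4} \<le> 4^(Suc (12*k+4))"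
    using card_trees by blast+
  have "card (Fam k) \<le> card {t. sz t \<le> 12*k+4}" unfolding Fam_def by (rule card_image_le[OF f])
  also have "\<dots> \<le> 4^(12*k+5)" using c by (simp add: add.commute)
  finally show ?thesis unfolding Fam_def using f by simp
qed

lemma cover_final:
  assumes k: "1 \<le> k" and S: "S \<subseteq> {..<2^(4*k+4)}" and w: "2^(2*k+1) \<le> card S"
  shows "\<exists>\<pi>\<in>Fam k. length \<pi> = k - 1 \<and> goodr S (0 # \<pi> @ [2^(4*k+4)])"
proof -
  let ?L = "4*k+4"
  have eq: "S \<inter> {0..<0+2^?L} = S" using S by auto
  have "(1::nat) \<le> 2^(2*k+1)" by simp
  then have "1 \<le> card S" using w by linarith
  then have "Succ k S 0 ?L \<or> Pot k S 0 ?L" using cover_main[OF k, of S 0 ?L] eq by simp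
  moreover have "\<not> Pot k S 0 ?L"
  proof
    assume "Pot k S 0 ?L"
    then obtain t where t: "tw t + 2 \<le> k" "onn t \<le> 2 * tw t"
        "card (S \<inter> {0..<0+2^?L})^3 \<le> 2^?L * 2^(2*tw t - onn t)"
      unfolding Pot_def by blast
    have t3: "card S^3 \<le> 2^?L * 2^(2*tw t - onn t)" using t(3) eq by simp
    have "2*tw t - onn t \<le> 2*k - 4" using t(1) by simp
    then have "(2::nat)^(2*tw t - onn t) \<le> 2^(2*k-4)" by (rule power_increasing) simp
    then have "card S^3 \<le> 2^?L * 2^(2*k-4)" using t3 by (meson le_trans mult_le_mono2)
    also have "(2::nat)^?L * 2^(2*k-4) = 2^(?L + (2*k-4))" by (simp only: power_add)
    also have "?L + (2*k-4) = 6*k" using t(1) by simp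
    finally have A: "card S^3 \<le> 2^(6*k)" .
    have "(2::nat)^(6*k+3) = (2^(2*k+1))^3" by (simp only: power_mult[symmetric]) (simp add: algebra_simps)
    also have "\<dots> \<le> card S^3" using w by (rule power_mono) simp
    finally have "(2::nat)^(6*k+3) \<le> 2^(6*k)" using A by linarith
    then show False by simp
  qed
  ultimately have "Succ k S 0 ?L" by blast
  then obtain t where t: "vd S t 0 ?L" "k \<le> tw t + 1" "sz t \<le> ?L + 8*k"
    unfolding Succ_def by blast
  have g: "goodr S (0 # cl t 0 ?L @ [2^?L])" using vd_good[OF t(1)] by simp
  let ?\<pi> = "take (k-1) (cl t 0 ?L)"
  have "sz t \<le> 12*k+4" using t(3) by simp
  then have "?\<pi> \<in> Fam k" unfolding Fam_def by blast
  moreover have "length ?\<pi> = k - 1" using t(2) length_cl[of t 0 ?L] by simp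
  moreover have "goodr S (0 # ?\<pi> @ [2^?L])" using goodr_take[OF g] .
  ultimately show ?thesis by blast
qed


definition hasgrid :: "nat \<Rightarrow> nat \<Rightarrow> (nat \<times> nat) set \<Rightarrow> bool" where
  "hasgrid n k A \<longleftrightarrow> (\<exists>br bc. interval_partition n k br \<and> interval_partition n k bc \<and>
     (\<forall>i<k. \<forall>j<k. \<exists>x y. (x,y) \<in> A \<and> br i \<le> x \<and> x < br (Suc i) \<and> bc j \<le> y \<and> y < bc (Suc j)))"

definition contr :: "nat \<Rightarrow> (nat \<times> nat) set \<Rightarrow> (nat \<times> nat) set" where
  "contr p A = (\<lambda>(x,y). (x div p, y div p)) ` A"

definition blk :: "nat \<Rightarrow> (nat \<times> nat) set \<Rightarrow> nat \<Rightarrow> nat \<Rightarrow> (nat \<times> nat) set" where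
  "blk p A X Y = A \<inter> ({p*X..<p*X+p} \<times> {p*Y..<p*Y+p})"

lemma contr_free:
  assumes p: "0 < p" and nf: "\<not> hasgrid (p*M) k A"
  shows "\<not> hasgrid M k (contr p A)"
proof
  assume "hasgrid M k (contr p A)"
  then obtain br bc where br: "interval_partition M k br" and bc: "interval_partition M k bc"
    and cells: "\<forall>i<k. \<forall>j<k. \<exists>x y. (x,y) \<in> contr p A \<and> br i \<le> x \<and> x < br (Suc i) \<and> bc j \<le> y \<and> y < bc (Suc j)"
    unfolding hasgrid_def by blast
  have br': "interval_partition (p*M) k (\<lambda>i. p * br i)" using br p unfolding interval_partition_def by auto
  have bc': "interval_partition (p*M) k (\<lambda>i. p * bc i)" using bc p unfolding interval_partition_def by auto
  have "\<forall>i<k. \<forall>j<k. \<exists>x y. (x,y) \<in> A \<and> p * br i \<le> x \<and> x < p * br (Suc i) \<and> p * bc j \<le> y \<and> y < p * bc (Suc j)"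
  proof (intro allI impI)
    fix i j assume ij: "i < k" "j < k"
    obtain X Y where XY: "(X,Y) \<in> contr p A" "br i \<le> X" "X < br (Suc i)" "bc j \<le> Y" "Y < bc (Suc j)"
      using cells ij by blast
    then obtain x y where xy: "(x,y) \<in> A" "X = x div p" "Y = y div p" unfolding contr_def by auto
    have "p * br i \<le> p * X" using XY by simp
    also have "p * X \<le> x" using xy p by (simp add: mult.commute)
    finally have 1: "p * br i \<le> x" .
    have "x < p * X + p" using xy p
      by (metis add.commute div_mult_mod_eq mod_less_divisor mult.commute nat_add_left_cancel_less)
    also have "p * X + p = p * Suc X" by simp
    also have "\<dots> \<le> p * br (Suc i)" using XY(3) by (metis Suc_leI mult_le_mono2)
    finally have 2: "x < p * br (Suc i)" .
    have "p * bc j \<le> p * Y" using XY by simp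
    also have "p * Y \<le> y" using xy p by (simp add: mult.commute)
    finally have 3: "p * bc j \<le> y" .
    have "y < p * Y + p" using xy p
      by (metis add.commute div_mult_mod_eq mod_less_divisor mult.commute nat_add_left_cancel_less)
    also have "p * Y + p = p * Suc Y" by simp
    also have "\<dots> \<le> p * bc (Suc j)" using XY(5) by (metis Suc_leI mult_le_mono2)
    finally have 4: "y < p * bc (Suc j)" .
    show "\<exists>x y. (x,y) \<in> A \<and> p * br i \<le> x \<and> x < p * br (Suc i) \<and> p * bc j \<le> y \<and> y < p * bc (Suc j)"
      using xy(1) 1 2 3 4 by blast
  qed
  then have "hasgrid (p*M) k A" unfolding hasgrid_def using br' bc' by blast
  then show False using nf by simp
qed

lemma pigeon:
  assumes "finite G" "finite F" "f ` G \<subseteq> F" "m * card F < card G"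
  shows "\<exists>\<pi>\<in>F. m < card {X\<in>G. f X = \<pi>}"
proof (rule ccontr)
  assume "\<not> ?thesis"
  then have le: "\<forall>\<pi>\<in>F. card {X\<in>G. f X = \<pi>} \<le> m" by auto
  have "G = (\<Union>\<pi>\<in>F. {X\<in>G. f X = \<pi>})" using assms(3) by auto
  then have "card G \<le> (\<Sum>\<pi>\<in>F. card {X\<in>G. f X = \<pi>})" using card_UN_le[OF assms(2)] by metis
  also have "\<dots> \<le> (\<Sum>\<pi>\<in>F. m)" using le by (intro sum_mono) auto
  also have "\<dots> = m * card F" by simp
  finally show False using assms(4) by simp
qed

lemma chain_less:
  assumes "\<forall>j<k. (l::nat list)!j < l!Suc j" "j < j'" "j' \<le> k"
  shows "l!j < l!j'"
  using assms(2,3)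
proof (induction j')
  case 0 then show ?case by simp
next
  case (Suc j')
  show ?case
  proof (cases "j = j'")
    case True then show ?thesis using assms(1) Suc.prems by simp
  next
    case False
    then have "l!j < l!j'" using Suc by simp
    also have "l!j' < l!Suc j'" using assms(1) Suc.prems by simp
    finally show ?thesis .
  qed
qed

lemma grid_build:
  assumes k: "1 \<le> k" and xs: "sorted_wrt (<) xs" "k \<le> length xs" "\<forall>x\<in>set xs. x < M"
    and l: "length l = Suc k" "l!0 = 0" "l!k = p" "\<forall>j<k. l!j < l!Suc j"
    and Y: "Y < M"
    and cells: "\<forall>i<k. \<forall>j<k. \<exists>r c. (r,c) \<in> A \<and> p*(xs!i) \<le> r \<and> r < p*(xs!i) + p \<and> p*Y + l!j \<le> c \<and> c < p*Y + l!(Suc j)"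
  shows "hasgrid (p*M) k A"
proof -
  have p: "0 < p" using chain_less[OF l(4), of 0 k] k l(2,3) by simp
  have xsM: "\<And>i. i < k \<Longrightarrow> xs!i < M" using xs(2,3) by (meson less_le_trans nth_mem)
  have xsl: "\<And>i. Suc i < k \<Longrightarrow> xs!i < xs!Suc i" using xs(1,2) sorted_wrt_nth_less by fastforce
  have M: "0 < M" using xsM[of 0] k by simp
  define br where "br i = (if i = 0 then 0 else if i < k then p*(xs!i) else p*M)" for i
  define bc where "bc j = (if j = 0 then 0 else if j < k then p*Y + l!j else p*M)" for j
  have brp: "interval_partition (p*M) k br"
    unfolding interval_partition_def
  proof (intro conjI allI impI)
    show "br 0 = 0" by (simp add: br_def)
    show "br k = p*M" using k by (simp add: br_def)
    fix i assume i: "i < k"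
    show "br i < br (Suc i)"
    proof (cases "i = 0")
      case True
      show ?thesis
      proof (cases "Suc i < k")
        case True
        then have "xs!0 < xs!1" using xsl[of 0] \<open>i = 0\<close> by simp
        then have "0 < p * (xs!1)" using p by simp
        then show ?thesis using True \<open>i = 0\<close> by (simp add: br_def)
      next
        case False
        then show ?thesis using \<open>i = 0\<close> p M by (simp add: br_def)
      qed
    next
      case False
      show ?thesis
      proof (cases "Suc i < k")
        case True
        then show ?thesis using False xsl[of i] p i by (simp add: br_def)
      next
        case False
        then show ?thesis using \<open>i \<noteq> 0\<close> xsM[of i] p i by (simp add: br_def)
      qed
    qed
  qed
  have lp: "\<And>j. j < k \<Longrightarrow> l!j < p" using chain_less[OF l(4)] l(3) by auto
  have bcp: "interval_partition (p*M) k bc"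
    unfolding interval_partition_def
  proof (intro conjI allI impI)
    show "bc 0 = 0" by (simp add: bc_def)
    show "bc k = p*M" using k by (simp add: bc_def)
    fix j assume j: "j < k"
    have YM: "p*Y + p \<le> p*M" using Y by (metis Suc_leI mult_Suc_right mult_le_mono2 add.commute)
    show "bc j < bc (Suc j)"
    proof (cases "j = 0")
      case True
      show ?thesis
      proof (cases "Suc j < k")
        case True
        then have "0 < l!1" using l(2,4) \<open>j = 0\<close> by (metis One_nat_def less_nat_zero_code neq0_conv)
        then show ?thesis using True \<open>j = 0\<close> by (simp add: bc_def)
      next
        case False
        then show ?thesis using \<open>j = 0\<close> p M by (simp add: bc_def)
      qed
    next
      case False
      show ?thesis
      proof (cases "Suc j < k")
        case True
        then show ?thesis using False l(4) j by (simp add: bc_def)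
      next
        case False
        then show ?thesis using \<open>j \<noteq> 0\<close> lp[OF j] YM j by (simp add: bc_def)
      qed
    qed
  qed
  have "\<forall>i<k. \<forall>j<k. \<exists>x y. (x,y) \<in> A \<and> br i \<le> x \<and> x < br (Suc i) \<and> bc j \<le> y \<and> y < bc (Suc j)"
  proof (intro allI impI)
    fix i j assume i: "i < k" and j: "j < k"
    obtain r c where rc: "(r,c) \<in> A" "p*(xs!i) \<le> r" "r < p*(xs!i) + p" "p*Y + l!j \<le> c" "c < p*Y + l!(Suc j)"
      using cells i j by blast
    have 1: "br i \<le> r" using rc(2) i by (simp add: br_def)
    have 2: "r < br (Suc i)"
    proof (cases "Suc i < k")
      case True
      have "p*(xs!i) + p = p * Suc (xs!i)" by simp
      also have "\<dots> \<le> p * (xs!Suc i)" using xsl[OF True] by (metis Suc_leI mult_le_mono2)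
      finally show ?thesis using rc(3) True by (simp add: br_def)
    next
      case False
      have "p*(xs!i) + p = p * Suc (xs!i)" by simp
      also have "\<dots> \<le> p * M" using xsM[OF i] by (metis Suc_leI mult_le_mono2)
      finally show ?thesis using rc(3) False by (simp add: br_def)
    qed
    have 3: "bc j \<le> c" using rc(4) j by (simp add: bc_def)
    have 4: "c < bc (Suc j)"
    proof (cases "Suc j < k")
      case True
      then show ?thesis using rc(5) by (simp add: bc_def)
    next
      case False
      then have "Suc j = k" using j by simp
      then have "l!(Suc j) = p" using l(3) by simp
      moreover have "p*Y + p \<le> p*M" using Y by (metis Suc_leI mult_Suc_right mult_le_mono2 add.commute)
      ultimately show ?thesis using rc(5) False by (simp add: bc_def)
    qed
    show "\<exists>x y. (x,y) \<in> A \<and> br i \<le> x \<and> x < br (Suc i) \<and> bc j \<le> y \<and> y < bc (Suc j)"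
      using rc(1) 1 2 3 4 by blast
  qed
  then show ?thesis unfolding hasgrid_def using brp bcp by blast
qed

lemma wide_col:
  assumes k: "1 \<le> k" and p: "p = 2^(4*k+4)"
    and nf: "\<not> hasgrid (p*M) k A" and Y: "Y < M"
    and AM: "A \<subseteq> {..<p*M} \<times> {..<p*M}"
  shows "card {X. (X,Y) \<in> contr p A \<and> 2^(2*k+1) \<le> card (snd ` blk p A X Y)} \<le> (k-1) * card (Fam k)"
proof (rule ccontr)
  define G where "G = {X. (X,Y) \<in> contr p A \<and> 2^(2*k+1) \<le> card (snd ` blk p A X Y)}"
  assume "\<not> card {X. (X,Y) \<in> contr p A \<and> 2^(2*k+1) \<le> card (snd ` blk p A X Y)} \<le> (k-1) * card (Fam k)"
  then have big: "(k-1) * card (Fam k) < card G" unfolding G_def by simp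
  have pp: "0 < p" using p by simp
  have GM: "G \<subseteq> {..<M}"
  proof
    fix X assume "X \<in> G"
    then obtain x y where "(x,y) \<in> A" "X = x div p" unfolding G_def contr_def by auto
    then have "x < p*M" using AM by auto
    then show "X \<in> {..<M}" using \<open>X = x div p\<close> pp by (simp add: less_mult_imp_div_less mult.commute)
  qed
  have finG: "finite G" using GM finite_subset by blast
  define SX where "SX X = (\<lambda>c. c - p*Y) ` (snd ` blk p A X Y)" for X
  have SXp: "SX X \<subseteq> {..<2^(4*k+4)}" for X unfolding SX_def blk_def p by auto
  have cardSX: "card (SX X) = card (snd ` blk p A X Y)" for X
  proof -
    have "inj_on (\<lambda>c. c - p*Y) (snd ` blk p A X Y)"
      unfolding blk_def by (rule inj_onI) auto
    then show ?thesis unfolding SX_def by (rule card_image)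
  qed
  have ex: "\<exists>\<pi>\<in>Fam k. length \<pi> = k - 1 \<and> goodr (SX X) (0 # \<pi> @ [p])" if "X \<in> G" for X
  proof -
    have "2^(2*k+1) \<le> card (SX X)" using that cardSX unfolding G_def by simp
    then show ?thesis using cover_final[OF k SXp] p by simp
  qed
  define f where "f X = (SOME \<pi>. \<pi> \<in> Fam k \<and> length \<pi> = k - 1 \<and> goodr (SX X) (0 # \<pi> @ [p]))" for X
  have fprop: "f X \<in> Fam k \<and> length (f X) = k - 1 \<and> goodr (SX X) (0 # f X @ [p])" if "X \<in> G" for X
    using someI_ex[OF ex[OF that, unfolded Bex_def]] unfolding f_def by blast
  have finF: "finite (Fam k)" using Fam_card by blast
  obtain \<pi> where \<pi>: "\<pi> \<in> Fam k" and Hbig: "k - 1 < card {X\<in>G. f X = \<pi>}"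
    using pigeon[OF finG finF _ big] fprop by blast
  define H where "H = {X\<in>G. f X = \<pi>}"
  have finH: "finite H" using finG unfolding H_def by simp
  define xs where "xs = sorted_list_of_set H"
  have xs1: "sorted_wrt (<) xs" unfolding xs_def by (rule strict_sorted_list_of_set)
  have xs2: "k \<le> length xs" unfolding xs_def using Hbig finH H_def by simp
  have xsH: "set xs = H" unfolding xs_def using finH by simp
  have xs3: "\<forall>x\<in>set xs. x < M" using xsH GM unfolding H_def by auto
  define l where "l = 0 # \<pi> @ [p]"
  have Hne: "H \<noteq> {}" using Hbig unfolding H_def by (metis card.empty less_nat_zero_code)
  then obtain X0 where X0: "X0 \<in> H" by blast
  have fX0: "f X0 = \<pi>" "X0 \<in> G" using X0 unfolding H_def by auto
  have lenpi: "length \<pi> = k - 1" using fprop[OF fX0(2)] fX0(1) by simp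
  have l1: "length l = Suc k" using lenpi k unfolding l_def by simp
  have l2: "l!0 = 0" unfolding l_def by simp
  have l3: "l!k = p" unfolding l_def using lenpi k
    by (metis One_nat_def Suc_pred less_eq_Suc_le nth_Cons_Suc nth_append_length)
  have gl: "goodr (SX X) l" if "X \<in> H" for X
    using fprop[of X] that unfolding H_def l_def by auto
  have l4: "\<forall>j<k. l!j < l!Suc j"
  proof (intro allI impI)
    fix j assume "j < k"
    then obtain s where "l!j \<le> s" "s < l!Suc j" using goodr_nth[OF gl[OF X0], of j] l1 by auto
    then show "l!j < l!Suc j" by simp
  qed
  have cells: "\<forall>i<k. \<forall>j<k. \<exists>r c. (r,c) \<in> A \<and> p*(xs!i) \<le> r \<and> r < p*(xs!i) + p \<and> p*Y + l!j \<le> c \<and> c < p*Y + l!(Suc j)"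
  proof (intro allI impI)
    fix i j assume i: "i < k" and j: "j < k"
    have XH: "xs!i \<in> H" using xsH xs2 i by (metis less_le_trans nth_mem)
    obtain s where s: "s \<in> SX (xs!i)" "l!j \<le> s" "s < l!Suc j"
      using goodr_nth[OF gl[OF XH], of j] l1 j by auto
    then obtain c where c: "c \<in> snd ` blk p A (xs!i) Y" "s = c - p*Y" unfolding SX_def by auto
    then obtain r where r: "(r,c) \<in> blk p A (xs!i) Y" by auto
    then have rc: "(r,c) \<in> A" "p*(xs!i) \<le> r" "r < p*(xs!i) + p" "p*Y \<le> c" unfolding blk_def by auto
    have "p*Y + l!j \<le> c" "c < p*Y + l!(Suc j)" using s(2,3) c(2) rc(4) by auto
    then show "\<exists>r c. (r,c) \<in> A \<and> p*(xs!i) \<le> r \<and> r < p*(xs!i) + p \<and> p*Y + l!j \<le> c \<and> c < p*Y + l!(Suc j)"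
      using rc by blast
  qed
  have "hasgrid (p*M) k A" by (rule grid_build[OF k xs1 xs2 xs3 l1 l2 l3 l4 Y cells])
  then show False using nf by simp
qed


lemma finite_contr: "A \<subseteq> {..<n} \<times> {..<n} \<Longrightarrow> finite (contr p A)"
proof -
  assume "A \<subseteq> {..<n} \<times> {..<n}"
  then have "finite A" by (rule finite_subset) simp
  then show ?thesis unfolding contr_def by simp
qed

lemma wide_total:
  assumes k: "1 \<le> k" and p: "p = 2^(4*k+4)"
    and nf: "\<not> hasgrid (p*M) k A"
    and AM: "A \<subseteq> {..<p*M} \<times> {..<p*M}"
  shows "card {b \<in> contr p A. 2^(2*k+1) \<le> card (snd ` blk p A (fst b) (snd b))} \<le> M * ((k-1) * card (Fam k))"
proof -
  define W where "W Y = {X. (X,Y) \<in> contr p A \<and> 2^(2*k+1) \<le> card (snd ` blk p A X Y)}" for Y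
  define B where "B = {b \<in> contr p A. 2^(2*k+1) \<le> card (snd ` blk p A (fst b) (snd b))}"
  have pp: "0 < p" using p by simp
  have fin: "finite (contr p A)" using finite_contr[OF AM] .
  have sub: "B \<subseteq> (\<Union>Y\<in>{..<M}. (\<lambda>X. (X,Y)) ` W Y)"
  proof
    fix b assume b: "b \<in> B"
    obtain X Y where XY: "b = (X,Y)" by (cases b)
    have inA': "(X,Y) \<in> contr p A" using b XY unfolding B_def by simp
    then obtain x y where xy: "(x,y) \<in> A" "Y = y div p" unfolding contr_def by auto
    then have "y < p*M" using AM by auto
    then have YM: "Y < M" using xy(2) pp by (simp add: less_mult_imp_div_less mult.commute)
    have "X \<in> W Y" using b XY unfolding B_def W_def by simp
    then show "b \<in> (\<Union>Y\<in>{..<M}. (\<lambda>X. (X,Y)) ` W Y)" using YM XY by blast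
  qed
  have finW: "finite (W Y)" for Y
  proof -
    have "W Y \<subseteq> fst ` contr p A" unfolding W_def by (auto intro: rev_image_eqI)
    then show ?thesis using fin by (meson finite_imageI finite_subset)
  qed
  have "card B \<le> card (\<Union>Y\<in>{..<M}. (\<lambda>X. (X,Y)) ` W Y)"
    by (rule card_mono[OF _ sub]) (simp add: finW)
  also have "\<dots> \<le> (\<Sum>Y\<in>{..<M}. card ((\<lambda>X. (X,Y)) ` W Y))" by (rule card_UN_le) simp
  also have "\<dots> \<le> (\<Sum>Y\<in>{..<M}. (k-1) * card (Fam k))"
  proof (rule sum_mono)
    fix Y assume "Y \<in> {..<M}"
    then have c: "card (W Y) \<le> (k-1) * card (Fam k)" unfolding W_def using wide_col[OF k p nf _ AM] by simp
    have "card ((\<lambda>X. (X,Y)) ` W Y) \<le> card (W Y)" by (rule card_image_le[OF finW])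
    then show "card ((\<lambda>X. (X,Y)) ` W Y) \<le> (k-1) * card (Fam k)" using c by linarith
  qed
  also have "\<dots> = M * ((k-1) * card (Fam k))" by simp
  finally show ?thesis unfolding B_def .
qed

lemma hasgrid_swap1: "hasgrid n k A \<Longrightarrow> hasgrid n k (prod.swap ` A)"
proof -
  assume "hasgrid n k A"
  then obtain br bc where br: "interval_partition n k br" and bc: "interval_partition n k bc"
    and cells: "\<forall>i<k. \<forall>j<k. \<exists>x y. (x,y) \<in> A \<and> br i \<le> x \<and> x < br (Suc i) \<and> bc j \<le> y \<and> y < bc (Suc j)"
    unfolding hasgrid_def by blast
  have "\<forall>i<k. \<forall>j<k. \<exists>x y. (x,y) \<in> prod.swap ` A \<and> bc i \<le> x \<and> x < bc (Suc i) \<and> br j \<le> y \<and> y < br (Suc j)"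
  proof (intro allI impI)
    fix i j assume "i < k" "j < k"
    then obtain x y where "(x,y) \<in> A" "br j \<le> x" "x < br (Suc j)" "bc i \<le> y" "y < bc (Suc i)"
      using cells by blast
    moreover have "(y,x) \<in> prod.swap ` A" using \<open>(x,y) \<in> A\<close> by force
    ultimately show "\<exists>x y. (x,y) \<in> prod.swap ` A \<and> bc i \<le> x \<and> x < bc (Suc i) \<and> br j \<le> y \<and> y < br (Suc j)"
      by blast
  qed
  then show ?thesis unfolding hasgrid_def using br bc by blast
qed

lemma hasgrid_swap: "hasgrid n k (prod.swap ` A) \<longleftrightarrow> hasgrid n k A"
proof -
  have "prod.swap ` prod.swap ` A = A" by (simp add: image_image)
  then show ?thesis using hasgrid_swap1[of n k A] hasgrid_swap1[of n k "prod.swap ` A"] by auto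
qed


lemma div_block: "0 < (p::nat) \<Longrightarrow> p * (x div p) \<le> x \<and> x < p * (x div p) + p"
proof -
  assume p: "0 < p"
  have e: "p * (x div p) + x mod p = x" by (simp add: mult.commute)
  have "x mod p < p" using p by simp
  then show ?thesis using e by linarith
qed

lemma A_union:
  assumes pp: "0 < p"
  shows "A = (\<Union>b\<in>contr p A. blk p A (fst b) (snd b))"
proof
  show "A \<subseteq> (\<Union>b\<in>contr p A. blk p A (fst b) (snd b))"
  proof
    fix z assume z: "z \<in> A"
    obtain x y where xy: "z = (x,y)" by (cases z)
    have m: "(x div p, y div p) \<in> contr p A" using z xy unfolding contr_def by force
    have "(x,y) \<in> blk p A (x div p) (y div p)"
      using z xy div_block[OF pp, of x] div_block[OF pp, of y] unfolding blk_def by simp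
    then show "z \<in> (\<Union>b\<in>contr p A. blk p A (fst b) (snd b))" using xy m by force
  qed
next
  show "(\<Union>b\<in>contr p A. blk p A (fst b) (snd b)) \<subseteq> A" unfolding blk_def by auto
qed

lemma blk_swap: "snd ` blk p (prod.swap ` A) Y X = fst ` blk p A X Y"
proof -
  have "blk p (prod.swap ` A) Y X = prod.swap ` blk p A X Y" unfolding blk_def by auto
  then show ?thesis by (simp add: image_image)
qed

lemma contr_swap: "contr p (prod.swap ` A) = prod.swap ` contr p A"
  unfolding contr_def by (auto simp: image_image intro!: image_cong)

lemma sum_split3:
  "finite S \<Longrightarrow> (\<Sum>b\<in>S. (c::nat) + (if P b then q else 0) + (if Q b then q else 0))
     = c * card S + q * card {b\<in>S. P b} + q * card {b\<in>S. Q b}"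
  by (simp add: sum.distrib sum.If_cases Int_def)

lemma step:
  assumes k: "1 \<le> k" and p: "p = 2^(4*k+4)"
    and nf: "\<not> hasgrid (p*M) k A"
    and AM: "A \<subseteq> {..<p*M} \<times> {..<p*M}"
  shows "card A \<le> 2^(4*k+2) * card (contr p A) + 2 * (p * p) * (M * ((k-1) * card (Fam k)))"
proof -
  let ?A' = "contr p A"
  let ?w = "(2::nat)^(2*k+1)"
  let ?K = "M * ((k-1) * card (Fam k))"
  have pp: "0 < p" using p by simp
  have finA': "finite ?A'" using finite_contr[OF AM] .
  define wide where "wide b = (?w \<le> card (snd ` blk p A (fst b) (snd b)))" for b
  define tall where "tall b = (?w \<le> card (fst ` blk p A (fst b) (snd b)))" for b
  have blkb: "card (blk p A (fst b) (snd b)) \<le> 2^(4*k+2) + (if wide b then p*p else 0) + (if tall b then p*p else 0)" for b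
  proof (cases "wide b \<or> tall b")
    case True
    have "blk p A (fst b) (snd b) \<subseteq> {p*fst b..<p*fst b+p} \<times> {p*snd b..<p*snd b+p}" unfolding blk_def by auto
    then have "card (blk p A (fst b) (snd b)) \<le> card ({p*fst b..<p*fst b+p} \<times> {p*snd b..<p*snd b+p})"
      by (rule card_mono[rotated]) simp
    also have "\<dots> = p * p" by (simp add: card_cartesian_product)
    finally have "card (blk p A (fst b) (snd b)) \<le> p * p" .
    then show ?thesis using True by auto
  next
    case False
    let ?B = "blk p A (fst b) (snd b)"
    have fB: "finite ?B" unfolding blk_def by simp
    have "?B \<subseteq> fst ` ?B \<times> snd ` ?B" by force
    then have "card ?B \<le> card (fst ` ?B \<times> snd ` ?B)" by (rule card_mono[rotated]) (simp add: fB)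
    also have "\<dots> = card (fst ` ?B) * card (snd ` ?B)" by (simp add: card_cartesian_product)
    also have "\<dots> \<le> ?w * ?w" using False unfolding wide_def tall_def by (intro mult_mono) auto
    also have "\<dots> = 2^(4*k+2)" by (simp add: power_add[symmetric])
    finally show ?thesis by simp
  qed
  have "card A \<le> (\<Sum>b\<in>?A'. card (blk p A (fst b) (snd b)))"
    using card_UN_le[OF finA', of "\<lambda>b. blk p A (fst b) (snd b)"] A_union[OF pp, of A] by simp
  also have "\<dots> \<le> (\<Sum>b\<in>?A'. 2^(4*k+2) + (if wide b then p*p else 0) + (if tall b then p*p else 0))"
    by (rule sum_mono) (rule blkb)
  also have "\<dots> = 2^(4*k+2) * card ?A' + p*p * card {b\<in>?A'. wide b} + p*p * card {b\<in>?A'. tall b}"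
    by (rule sum_split3[OF finA'])
  finally have main: "card A \<le> 2^(4*k+2) * card ?A' + p*p * card {b\<in>?A'. wide b} + p*p * card {b\<in>?A'. tall b}" .
  have cw: "card {b\<in>?A'. wide b} \<le> ?K" unfolding wide_def by (rule wide_total[OF k p nf AM])
  have ct: "card {b\<in>?A'. tall b} \<le> ?K"
  proof -
    let ?sA = "prod.swap ` A"
    have nf': "\<not> hasgrid (p*M) k ?sA" using nf hasgrid_swap by simp
    have AM': "?sA \<subseteq> {..<p*M} \<times> {..<p*M}" using AM by auto
    have W: "card {b \<in> contr p ?sA. ?w \<le> card (snd ` blk p ?sA (fst b) (snd b))} \<le> ?K"
      by (rule wide_total[OF k p nf' AM'])
    have "{b\<in>?A'. tall b} = prod.swap ` {b \<in> contr p ?sA. ?w \<le> card (snd ` blk p ?sA (fst b) (snd b))}"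
    proof -
      have "{b \<in> contr p ?sA. ?w \<le> card (snd ` blk p ?sA (fst b) (snd b))}
          = prod.swap ` {b\<in>?A'. tall b}"
        unfolding contr_swap tall_def by (auto simp: blk_swap)
      then show ?thesis by (simp add: image_image)
    qed
    moreover have "finite {b \<in> contr p ?sA. ?w \<le> card (snd ` blk p ?sA (fst b) (snd b))}"
      using finite_contr[OF AM'] by simp
    ultimately have "card {b\<in>?A'. tall b} \<le> card {b \<in> contr p ?sA. ?w \<le> card (snd ` blk p ?sA (fst b) (snd b))}"
      by (simp add: card_image_le)
    then show ?thesis using W by simp
  qed
  have "p*p * card {b\<in>?A'. wide b} \<le> p*p*?K" using cw by simp
  moreover have "p*p * card {b\<in>?A'. tall b} \<le> p*p*?K" using ct by simp
  moreover have "2*(p*p)*?K = p*p*?K + p*p*?K" by simp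
  ultimately show ?thesis using main by linarith
qed

lemma Kbound: "(k-1) * card (Fam k) \<le> k * 4^(12*k+5)"
proof -
  have "card (Fam k) \<le> 4^(12*k+5)" using Fam_card by blast
  then have "(k-1) * card (Fam k) \<le> (k-1) * 4^(12*k+5)" by simp
  also have "\<dots> \<le> k * 4^(12*k+5)" by simp
  finally show ?thesis .
qed

lemma contr_sub:
  assumes "0 < p" "A \<subseteq> {..<p*M} \<times> {..<p*M}"
  shows "contr p A \<subseteq> {..<M} \<times> {..<M}"
proof
  fix z assume "z \<in> contr p A"
  then obtain x y where xy: "(x,y) \<in> A" "z = (x div p, y div p)" unfolding contr_def by auto
  then have "x < p*M" "y < p*M" using assms(2) by auto
  then show "z \<in> {..<M} \<times> {..<M}" using xy(2) assms(1)
    by (simp add: less_mult_imp_div_less mult.commute)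
qed

lemma extremal_pow:
  assumes k: "1 \<le> k" and p: "p = 2^(4*k+4)"
  shows "A \<subseteq> {..<p^m} \<times> {..<p^m} \<Longrightarrow> \<not> hasgrid (p^m) k A \<Longrightarrow> card A \<le> (4 * (k * 4^(12*k+5)) * p) * p^m"
proof (induction m arbitrary: A)
  case 0
  have "A \<subseteq> {(0,0)}" using 0 by auto
  then have "card A \<le> 1" by (metis card.empty card.insert card_mono empty_iff finite.intros le_numeral_extra(4) One_nat_def)
  moreover have "1 \<le> 4 * (k * 4^(12*k+5)) * p" using k p by simp
  ultimately have "card A \<le> 4 * (k * 4^(12*k+5)) * p" by linarith
  then show ?case by simp
next
  case (Suc m)
  let ?K = "k * 4^(12*k+5)"
  let ?c = "4 * ?K * p"
  let ?M = "p^m"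
  have pp: "0 < p" using p by simp
  have AM: "A \<subseteq> {..<p*?M} \<times> {..<p*?M}" using Suc.prems(1) by simp
  have nf: "\<not> hasgrid (p*?M) k A" using Suc.prems(2) by simp
  have IH: "card (contr p A) \<le> ?c * ?M"
    using Suc.IH[OF contr_sub[OF pp AM] contr_free[OF pp nf]] .
  have "card A \<le> 2^(4*k+2) * card (contr p A) + 2 * (p * p) * (?M * ((k-1) * card (Fam k)))"
    by (rule step[OF k p nf AM])
  also have "\<dots> \<le> 2^(4*k+2) * (?c * ?M) + 2 * (p * p) * (?M * ?K)"
  proof (rule add_mono)
    show "2^(4*k+2) * card (contr p A) \<le> 2^(4*k+2) * (?c * ?M)" using IH by (rule mult_le_mono2)
    have "?M * ((k-1) * card (Fam k)) \<le> ?M * ?K" using Kbound[of k] by (rule mult_le_mono2)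
    then show "2 * (p * p) * (?M * ((k-1) * card (Fam k))) \<le> 2 * (p * p) * (?M * ?K)" by (rule mult_le_mono2)
  qed
  also have "2^(4*k+2) * (?c * ?M) = (4 * 2^(4*k+2)) * ?K * p * ?M" by (simp add: algebra_simps)
  also have "(4::nat) * 2^(4*k+2) = p" using p by (simp add: power_add)
  also have "p * ?K * p * ?M + 2 * (p * p) * (?M * ?K) = 3 * ?K * p * (p * ?M)" by (simp add: algebra_simps)
  also have "\<dots> \<le> ?c * (p * ?M)" by simp
  finally show ?case by simp
qed

lemma hasgrid_shrink:
  assumes k: "1 \<le> k" and g: "hasgrid N k A" and A: "A \<subseteq> {..<n} \<times> {..<n}"
  shows "hasgrid n k A"
proof -
  obtain br bc where br: "interval_partition N k br" and bc: "interval_partition N k bc"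
    and cells: "\<forall>i<k. \<forall>j<k. \<exists>x y. (x,y) \<in> A \<and> br i \<le> x \<and> x < br (Suc i) \<and> bc j \<le> y \<and> y < bc (Suc j)"
    using g unfolding hasgrid_def by blast
  have kk: "k - 1 < k" "Suc (k-1) = k" using k by auto
  obtain x y where "(x,y) \<in> A" "br (k-1) \<le> x" "bc (k-1) \<le> y"
    using cells kk(1) by blast
  then have brn: "br (k-1) < n" and bcn: "bc (k-1) < n" using A by auto
  define br' where "br' i = (if i = k then n else br i)" for i
  define bc' where "bc' i = (if i = k then n else bc i)" for i
  have br': "interval_partition n k br'"
    unfolding interval_partition_def
  proof (intro conjI allI impI)
    show "br' 0 = 0" using k br unfolding br'_def interval_partition_def by auto
    show "br' k = n" unfolding br'_def by simp
    fix i assume i: "i < k"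
    show "br' i < br' (Suc i)"
    proof (cases "Suc i = k")
      case True
      then have "i = k - 1" by simp
      then show ?thesis using brn True i unfolding br'_def by simp
    next
      case False
      then show ?thesis using br i unfolding br'_def interval_partition_def by simp
    qed
  qed
  have bc': "interval_partition n k bc'"
    unfolding interval_partition_def
  proof (intro conjI allI impI)
    show "bc' 0 = 0" using k bc unfolding bc'_def interval_partition_def by auto
    show "bc' k = n" unfolding bc'_def by simp
    fix i assume i: "i < k"
    show "bc' i < bc' (Suc i)"
    proof (cases "Suc i = k")
      case True
      then have "i = k - 1" by simp
      then show ?thesis using bcn True i unfolding bc'_def by simp
    next
      case False
      then show ?thesis using bc i unfolding bc'_def interval_partition_def by simp
    qed
  qed
  have "\<forall>i<k. \<forall>j<k. \<exists>x y. (x,y) \<in> A \<and> br' i \<le> x \<and> x < br' (Suc i) \<and> bc' j \<le> y \<and> y < bc' (Suc j)"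
  proof (intro allI impI)
    fix i j assume ij: "i < k" "j < k"
    then obtain x y where xy: "(x,y) \<in> A" "br i \<le> x" "x < br (Suc i)" "bc j \<le> y" "y < bc (Suc j)"
      using cells by blast
    have "x < n" "y < n" using xy(1) A by auto
    then show "\<exists>x y. (x,y) \<in> A \<and> br' i \<le> x \<and> x < br' (Suc i) \<and> bc' j \<le> y \<and> y < bc' (Suc j)"
      using xy ij unfolding br'_def bc'_def by (intro exI[of _ x] exI[of _ y]) auto
  qed
  then show ?thesis unfolding hasgrid_def using br' bc' by blast
qed

lemma extremal:
  assumes k: "1 \<le> k" and A: "A \<subseteq> {..<n} \<times> {..<n}" and nf: "\<not> hasgrid n k A"
  shows "card A \<le> (4 * (k * 4^(12*k+5)) * 2^(4*k+4)) * 2^(4*k+4) * n"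
proof (cases "n = 0")
  case True
  then show ?thesis using A by simp
next
  case False
  define p :: nat where "p = 2^(4*k+4)"
  have p2: "2 \<le> p" unfolding p_def using power_increasing[of 1 "4*k+4" "2::nat"] by simp
  have ex: "\<exists>m. n \<le> p^m"
  proof -
    have "n < 2^n" by (rule less_exp)
    also have "(2::nat)^n \<le> p^n" using p2 by (rule power_mono) simp
    finally show ?thesis by (intro exI[of _ n]) simp
  qed
  define m where "m = (LEAST m. n \<le> p^m)"
  have nm: "n \<le> p^m" unfolding m_def using LeastI_ex[OF ex] .
  have mpn: "p^m \<le> p * n"
  proof (cases m)
    case 0
    then show ?thesis using False p2 by simp
  next
    case (Suc m')
    then have "\<not> n \<le> p^m'" unfolding m_def using not_less_Least by (metis lessI)
    then have "p^m' < n" by simp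
    then have "p * p^m' \<le> p * n" by simp
    then show ?thesis using Suc by simp
  qed
  have A': "A \<subseteq> {..<p^m} \<times> {..<p^m}" using A nm by auto
  have nf': "\<not> hasgrid (p^m) k A" using hasgrid_shrink[OF k _ A] nf by blast
  have "card A \<le> (4 * (k * 4^(12*k+5)) * p) * p^m" using extremal_pow[OF k p_def A' nf'] .
  also have "\<dots> \<le> (4 * (k * 4^(12*k+5)) * p) * (p * n)" using mpn by simp
  finally show ?thesis unfolding p_def by (simp add: algebra_simps)
qed


definition Cor :: "nat \<Rightarrow> (nat \<Rightarrow> nat \<Rightarrow> bool) \<Rightarrow> (nat \<times> nat) set" where
  "Cor n M = {(i,j). i + 2 \<le> n \<and> j + 2 \<le> n \<and> mixed M {i..<i+2} {j..<j+2}}"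

lemma mixed_mono: "mixed M I' J' \<Longrightarrow> I' \<subseteq> I \<Longrightarrow> J' \<subseteq> J \<Longrightarrow> mixed M I J"
  unfolding mixed_def horizontal_def vertical_def by blast

lemma lift_part:
  assumes d: "1 \<le> d" and br: "interval_partition m d br"
    and last: "br (d-1) \<le> x0" "2*x0+\<rho>+2 \<le> n" and rho: "\<rho> \<le> 1"
  defines "br' \<equiv> (\<lambda>i. if i = 0 then 0 else if i < d then 2 * br i + \<rho> else n)"
  shows "interval_partition n d br' \<and>
     (\<forall>a<d. \<forall>x. br a \<le> x \<and> x < br (Suc a) \<and> 2*x+\<rho>+2 \<le> n \<longrightarrow> br' a \<le> 2*x+\<rho> \<and> 2*x+\<rho>+2 \<le> br' (Suc a))"
proof (intro conjI)
  have b0: "br 0 = 0" and mono: "\<forall>i<d. br i < br (Suc i)" using br unfolding interval_partition_def by auto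
  show "interval_partition n d br'"
    unfolding interval_partition_def
  proof (intro conjI allI impI)
    show "br' 0 = 0" unfolding br'_def by simp
    show "br' d = n" unfolding br'_def using d by simp
    fix i assume i: "i < d"
    show "br' i < br' (Suc i)"
    proof (cases "Suc i < d")
      case True
      then show ?thesis using mono i b0 unfolding br'_def by auto
    next
      case False
      then have "i = d - 1" using i by simp
      then have "2 * br i + \<rho> < n" using last by simp
      then show ?thesis using False i unfolding br'_def by auto
    qed
  qed
  show "\<forall>a<d. \<forall>x. br a \<le> x \<and> x < br (Suc a) \<and> 2*x+\<rho>+2 \<le> n \<longrightarrow> br' a \<le> 2*x+\<rho> \<and> 2*x+\<rho>+2 \<le> br' (Suc a)"
  proof (intro allI impI)
    fix a x assume a: "a < d" and x: "br a \<le> x \<and> x < br (Suc a) \<and> 2*x+\<rho>+2 \<le> n"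
    have 1: "br' a \<le> 2*x+\<rho>" using x a unfolding br'_def by auto
    have 2: "2*x+\<rho>+2 \<le> br' (Suc a)"
    proof (cases "Suc a < d")
      case True
      then show ?thesis using x unfolding br'_def by auto
    next
      case False
      then show ?thesis using x unfolding br'_def by auto
    qed
    show "br' a \<le> 2*x+\<rho> \<and> 2*x+\<rho>+2 \<le> br' (Suc a)" using 1 2 by simp
  qed
qed

definition Apar :: "nat \<Rightarrow> (nat \<Rightarrow> nat \<Rightarrow> bool) \<Rightarrow> nat \<Rightarrow> nat \<Rightarrow> (nat \<times> nat) set" where
  "Apar n M \<rho> \<sigma> = {(x,y). (2*x+\<rho>, 2*y+\<sigma>) \<in> Cor n M}"

lemma Apar_sub: "Apar n M \<rho> \<sigma> \<subseteq> {..<n} \<times> {..<n}"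
  unfolding Apar_def Cor_def by auto

lemma Apar_free:
  assumes d: "1 \<le> d" and mf: "mixed_free n d M" and rho: "\<rho> \<le> 1" and sig: "\<sigma> \<le> 1"
  shows "\<not> hasgrid n d (Apar n M \<rho> \<sigma>)"
proof
  assume "hasgrid n d (Apar n M \<rho> \<sigma>)"
  then obtain br bc where br: "interval_partition n d br" and bc: "interval_partition n d bc"
    and cells: "\<forall>i<d. \<forall>j<d. \<exists>x y. (x,y) \<in> Apar n M \<rho> \<sigma> \<and> br i \<le> x \<and> x < br (Suc i) \<and> bc j \<le> y \<and> y < bc (Suc j)"
    unfolding hasgrid_def by blast
  have dd: "d - 1 < d" using d by simp
  obtain x0 y0 where p0: "(x0,y0) \<in> Apar n M \<rho> \<sigma>" "br (d-1) \<le> x0" "bc (d-1) \<le> y0"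
    using cells dd by blast
  have c0: "2*x0+\<rho>+2 \<le> n" "2*y0+\<sigma>+2 \<le> n" using p0(1) unfolding Apar_def Cor_def by auto
  define br' where "br' = (\<lambda>i. if i = 0 then 0 else if i < d then 2 * br i + \<rho> else n)"
  define bc' where "bc' = (\<lambda>i. if i = 0 then 0 else if i < d then 2 * bc i + \<sigma> else n)"
  have R: "interval_partition n d br' \<and>
     (\<forall>a<d. \<forall>x. br a \<le> x \<and> x < br (Suc a) \<and> 2*x+\<rho>+2 \<le> n \<longrightarrow> br' a \<le> 2*x+\<rho> \<and> 2*x+\<rho>+2 \<le> br' (Suc a))"
    unfolding br'_def by (rule lift_part[OF d br p0(2) c0(1) rho])
  have C: "interval_partition n d bc' \<and>
     (\<forall>a<d. \<forall>x. bc a \<le> x \<and> x < bc (Suc a) \<and> 2*x+\<sigma>+2 \<le> n \<longrightarrow> bc' a \<le> 2*x+\<sigma> \<and> 2*x+\<sigma>+2 \<le> bc' (Suc a))"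
    unfolding bc'_def by (rule lift_part[OF d bc p0(3) c0(2) sig])
  have "\<forall>i<d. \<forall>j<d. mixed M {br' i..<br' (Suc i)} {bc' j..<bc' (Suc j)}"
  proof (intro allI impI)
    fix i j assume ij: "i < d" "j < d"
    obtain x y where xy: "(x,y) \<in> Apar n M \<rho> \<sigma>" "br i \<le> x" "x < br (Suc i)" "bc j \<le> y" "y < bc (Suc j)"
      using cells ij by blast
    have cor: "2*x+\<rho>+2 \<le> n" "2*y+\<sigma>+2 \<le> n" "mixed M {2*x+\<rho>..<2*x+\<rho>+2} {2*y+\<sigma>..<2*y+\<sigma>+2}"
      using xy(1) unfolding Apar_def Cor_def by auto
    have "br' i \<le> 2*x+\<rho> \<and> 2*x+\<rho>+2 \<le> br' (Suc i)"
      using conjunct2[OF R, rule_format, of i x] ij(1) xy(2,3) cor(1) by blast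
    then have s1: "{2*x+\<rho>..<2*x+\<rho>+2} \<subseteq> {br' i..<br' (Suc i)}" by auto
    have "bc' j \<le> 2*y+\<sigma> \<and> 2*y+\<sigma>+2 \<le> bc' (Suc j)"
      using conjunct2[OF C, rule_format, of j y] ij(2) xy(4,5) cor(2) by blast
    then have s2: "{2*y+\<sigma>..<2*y+\<sigma>+2} \<subseteq> {bc' j..<bc' (Suc j)}" by auto
    show "mixed M {br' i..<br' (Suc i)} {bc' j..<bc' (Suc j)}" by (rule mixed_mono[OF cor(3) s1 s2])
  qed
  then show False using mf R C unfolding mixed_free_def by blast
qed


lemma Cor_sub: "Cor n M \<subseteq> (\<lambda>(x,y). (2*x, 2*y)) ` Apar n M 0 0 \<union> (\<lambda>(x,y). (2*x, 2*y+1)) ` Apar n M 0 1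
   \<union> ((\<lambda>(x,y). (2*x+1, 2*y)) ` Apar n M 1 0 \<union> (\<lambda>(x,y). (2*x+1, 2*y+1)) ` Apar n M 1 1)"
proof
  fix z assume z: "z \<in> Cor n M"
  obtain i j where ij: "z = (i,j)" by (cases z)
  have a: "(i div 2, j div 2) \<in> Apar n M (i mod 2) (j mod 2)" using z ij unfolding Apar_def by simp
  have b: "z = (2*(i div 2)+ i mod 2, 2*(j div 2)+ j mod 2)" using ij by simp
  consider "i mod 2 = 0" "j mod 2 = 0" | "i mod 2 = 0" "j mod 2 = 1" | "i mod 2 = 1" "j mod 2 = 0" | "i mod 2 = 1" "j mod 2 = 1"
    by (metis mod2_eq_if)
  then show "z \<in> (\<lambda>(x,y). (2*x, 2*y)) ` Apar n M 0 0 \<union> (\<lambda>(x,y). (2*x, 2*y+1)) ` Apar n M 0 1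
   \<union> ((\<lambda>(x,y). (2*x+1, 2*y)) ` Apar n M 1 0 \<union> (\<lambda>(x,y). (2*x+1, 2*y+1)) ` Apar n M 1 1)"
  proof cases
    case 1 then show ?thesis using a b by (auto intro!: rev_image_eqI[of "(i div 2, j div 2)"])
  next
    case 2 then show ?thesis using a b by (auto intro!: rev_image_eqI[of "(i div 2, j div 2)"])
  next
    case 3 then show ?thesis using a b by (auto intro!: rev_image_eqI[of "(i div 2, j div 2)"])
  next
    case 4 then show ?thesis using a b by (auto intro!: rev_image_eqI[of "(i div 2, j div 2)"])
  qed
qed

lemma card_Un4: "finite A \<Longrightarrow> finite B \<Longrightarrow> finite C \<Longrightarrow> finite D \<Longrightarrow>
  card (A \<union> B \<union> (C \<union> D)) \<le> card A + card B + card C + card D"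
proof -
  have "card (A \<union> B \<union> (C \<union> D)) \<le> card (A \<union> B) + card (C \<union> D)" by (rule card_Un_le)
  also have "\<dots> \<le> (card A + card B) + (card C + card D)" by (intro add_mono card_Un_le)
  finally show ?thesis by simp
qed

lemma Cor_card:
  assumes d: "1 \<le> d" and mf: "mixed_free n d M"
  shows "card (Cor n M) \<le> 4 * ((4 * (d * 4^(12*d+5)) * 2^(4*d+4)) * 2^(4*d+4) * n)"
proof -
  let ?E = "(4 * (d * 4^(12*d+5)) * 2^(4*d+4)) * 2^(4*d+4) * n"
  have fin: "finite (Apar n M \<rho> \<sigma>)" for \<rho> \<sigma>
    by (rule finite_subset[OF Apar_sub]) simp
  have bnd: "card (f ` Apar n M \<rho> \<sigma>) \<le> ?E" if "\<rho> \<le> 1" "\<sigma> \<le> 1" for \<rho> \<sigma> and f :: "nat \<times> nat \<Rightarrow> nat \<times> nat"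
  proof -
    have "card (f ` Apar n M \<rho> \<sigma>) \<le> card (Apar n M \<rho> \<sigma>)" by (rule card_image_le[OF fin])
    also have "\<dots> \<le> ?E" by (rule extremal[OF d Apar_sub Apar_free[OF d mf that]])
    finally show ?thesis .
  qed
  have "card (Cor n M) \<le> card ((\<lambda>(x,y). (2*x, 2*y)) ` Apar n M 0 0 \<union> (\<lambda>(x,y). (2*x, 2*y+1)) ` Apar n M 0 1
   \<union> ((\<lambda>(x,y). (2*x+1, 2*y)) ` Apar n M 1 0 \<union> (\<lambda>(x,y). (2*x+1, 2*y+1)) ` Apar n M 1 1))"
    by (rule card_mono[OF _ Cor_sub]) (simp add: fin)
  also have "\<dots> \<le> card ((\<lambda>(x,y). (2*x, 2*y)) ` Apar n M 0 0) + card ((\<lambda>(x,y). (2*x, 2*y+1)) ` Apar n M 0 1)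
     + card ((\<lambda>(x,y). (2*x+1, 2*y)) ` Apar n M 1 0) + card ((\<lambda>(x,y). (2*x+1, 2*y+1)) ` Apar n M 1 1)"
    by (rule card_Un4) (simp_all add: fin)
  also have "\<dots> \<le> ?E + ?E + ?E + ?E" by (intro add_mono bnd) simp_all
  also have "\<dots> = 4 * ?E" by linarith
  finally show ?thesis .
qed


definition run :: "nat \<Rightarrow> (nat \<Rightarrow> nat \<Rightarrow> bool) \<Rightarrow> nat \<Rightarrow> nat \<Rightarrow> nat \<Rightarrow> bool" where
  "run n M i a b \<longleftrightarrow> i < n \<and> a < b \<and> b \<le> n \<and> (\<forall>c. a \<le> c \<and> c < b \<longrightarrow> M i c)
      \<and> (a = 0 \<or> \<not> M i (a-1)) \<and> (b = n \<or> \<not> M i b)"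

lemma run_unique:
  assumes r1: "run n M i a b" and r2: "run n M i a' b'"
    and c: "a \<le> c" "c < b" "a' \<le> c" "c < b'"
  shows "a = a' \<and> b = b'"
proof -
  have A: "a = a'"
  proof (rule ccontr)
    assume "a \<noteq> a'"
    then consider "a < a'" | "a' < a" by linarith
    then show False
    proof cases
      case 1
      then have "\<not> M i (a'-1)" using r2 unfolding run_def by auto
      moreover have "a \<le> a'-1 \<and> a'-1 < b" using 1 c by linarith
      then have "M i (a'-1)" using r1 unfolding run_def by blast
      ultimately show False by simp
    next
      case 2
      then have "\<not> M i (a-1)" using r1 unfolding run_def by auto
      moreover have "a' \<le> a-1 \<and> a-1 < b'" using 2 c by linarith
      then have "M i (a-1)" using r2 unfolding run_def by blast
      ultimately show False by simp
    qed
  qed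
  have B: "b = b'"
  proof (rule ccontr)
    assume "b \<noteq> b'"
    then consider "b < b'" | "b' < b" by linarith
    then show False
    proof cases
      case 1
      then have "\<not> M i b" using r1 r2 unfolding run_def by auto
      moreover have "M i b" using r2 1 c unfolding run_def by auto
      ultimately show False by simp
    next
      case 2
      then have "\<not> M i b'" using r1 r2 unfolding run_def by auto
      moreover have "M i b'" using r1 2 c unfolding run_def by auto
      ultimately show False by simp
    qed
  qed
  show ?thesis using A B by simp
qed

lemma run_sep:
  assumes r1: "run n M i a b" and r2: "run n M i a' b'"
  shows "(a = a' \<and> b = b') \<or> b < a' \<or> b' < a"
proof (cases "a' < b \<and> a < b'")
  case True
  have "a \<le> max a a'" "max a a' < b" "a' \<le> max a a'" "max a a' < b'"
    using True r1 r2 unfolding run_def by auto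
  then show ?thesis using run_unique[OF r1 r2] by blast
next
  case False
  then consider "b \<le> a'" | "b' \<le> a" by linarith
  then show ?thesis
  proof cases
    case 1
    have "b \<noteq> a'"
    proof
      assume e: "b = a'"
      then have "b < n" using r2 unfolding run_def by auto
      then have "\<not> M i b" using r1 unfolding run_def by auto
      moreover have "M i a'" using r2 unfolding run_def by auto
      ultimately show False using e by simp
    qed
    then show ?thesis using 1 by simp
  next
    case 2
    have "b' \<noteq> a"
    proof
      assume e: "b' = a"
      then have "b' < n" using r1 unfolding run_def by auto
      then have "\<not> M i b'" using r2 unfolding run_def by auto
      moreover have "M i a" using r1 unfolding run_def by auto
      ultimately show False using e by simp
    qed
    then show ?thesis using 2 by simp
  qed
qed

definition newrun :: "nat \<Rightarrow> (nat \<Rightarrow> nat \<Rightarrow> bool) \<Rightarrow> nat \<Rightarrow> nat \<Rightarrow> nat \<Rightarrow> bool" where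
  "newrun n M i a b \<longleftrightarrow> run n M i a b \<and> (i = 0 \<or> \<not> run n M (i-1) a b)"

definition stk :: "nat \<Rightarrow> (nat \<Rightarrow> nat \<Rightarrow> bool) \<Rightarrow> nat \<Rightarrow> nat \<Rightarrow> nat \<Rightarrow> nat set" where
  "stk n M i a b = {r. i \<le> r \<and> (\<forall>r'. i \<le> r' \<and> r' \<le> r \<longrightarrow> run n M r' a b)}"

lemma stk_interval:
  assumes r: "run n M i a b"
  shows "\<exists>e. i < e \<and> e \<le> n \<and> stk n M i a b = {i..<e}"
proof -
  define P where "P e = (i < e \<and> \<not> run n M e a b)" for e
  have Pn: "P n" using r unfolding P_def run_def by auto
  define e where "e = (LEAST e. P e)"
  have Pe: "P e" unfolding e_def using LeastI[of P, OF Pn] .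
  have en: "e \<le> n" unfolding e_def using Least_le[of P, OF Pn] .
  have below: "run n M r' a b" if "i \<le> r'" "r' < e" for r'
  proof (cases "r' = i")
    case True then show ?thesis using r by simp
  next
    case False
    then have "i < r'" using that by simp
    moreover have "\<not> P r'" using that(2) unfolding e_def by (rule not_less_Least)
    ultimately show ?thesis unfolding P_def by simp
  qed
  have "stk n M i a b = {i..<e}"
  proof
    show "stk n M i a b \<subseteq> {i..<e}"
    proof
      fix x assume x: "x \<in> stk n M i a b"
      have "x < e"
      proof (rule ccontr)
        assume "\<not> x < e"
        then have "run n M e a b" using x Pe unfolding stk_def P_def by auto
        then show False using Pe unfolding P_def by simp
      qed
      then show "x \<in> {i..<e}" using x unfolding stk_def by simp
    qed
  next
    show "{i..<e} \<subseteq> stk n M i a b" unfolding stk_def using below by auto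
  qed
  then show ?thesis using Pe en unfolding P_def by blast
qed

definition NR :: "nat \<Rightarrow> (nat \<Rightarrow> nat \<Rightarrow> bool) \<Rightarrow> (nat \<times> nat \<times> nat) set" where
  "NR n M = {(i,a,b). newrun n M i a b}"

definition Rs :: "nat \<Rightarrow> (nat \<Rightarrow> nat \<Rightarrow> bool) \<Rightarrow> (nat \<times> nat) set set" where
  "Rs n M = (\<lambda>(i,a,b). stk n M i a b \<times> {a..<b}) ` NR n M"

lemma NR_sub: "NR n M \<subseteq> {..<n} \<times> {..<n} \<times> {..n}"
  unfolding NR_def newrun_def run_def by auto

lemma NR_fin: "finite (NR n M)"
  using NR_sub by (rule finite_subset) simp

lemma find_run:
  assumes "r < n" "c < n" "M r c"
  shows "\<exists>a b. run n M r a b \<and> a \<le> c \<and> c < b"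
proof -
  define P where "P a = (a \<le> c \<and> (\<forall>c'. a \<le> c' \<and> c' \<le> c \<longrightarrow> M r c'))" for a
  have Pc: "P c" using assms unfolding P_def by auto
  define a where "a = (LEAST a. P a)"
  have Pa: "P a" unfolding a_def using LeastI[of P, OF Pc] .
  have aleft: "a = 0 \<or> \<not> M r (a-1)"
  proof (cases "a = 0")
    case False
    then have "\<not> P (a-1)" unfolding a_def by (intro not_less_Least) simp
    then obtain c' where c': "a - 1 \<le> c'" "c' \<le> c" "\<not> M r c'" using Pa False unfolding P_def by auto
    have "\<not> a \<le> c'" using Pa c' unfolding P_def by auto
    then have "c' = a - 1" using c'(1) by linarith
    then show ?thesis using c' by simp
  qed simp
  define Q where "Q b = (c < b \<and> (b = n \<or> \<not> M r b))" for b
  have Qn: "Q n" using assms unfolding Q_def by simp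
  define b where "b = (LEAST b. Q b)"
  have Qb: "Q b" unfolding b_def using LeastI[of Q, OF Qn] .
  have bn: "b \<le> n" unfolding b_def using Least_le[of Q, OF Qn] .
  have ones: "M r c'" if "a \<le> c'" "c' < b" for c'
  proof (cases "c' \<le> c")
    case True then show ?thesis using Pa that unfolding P_def by auto
  next
    case False
    have "\<not> Q c'" using that(2) unfolding b_def by (rule not_less_Least)
    then show ?thesis using False that bn unfolding Q_def by auto
  qed
  have "run n M r a b" unfolding run_def using assms Pa Qb bn ones aleft unfolding P_def Q_def by auto
  then show ?thesis using Pa Qb unfolding P_def Q_def by blast
qed

lemma Rs_decomp: "rectangle_decomposition n M (Rs n M)"
  unfolding rectangle_decomposition_def
proof (intro conjI)
  show "finite (Rs n M)" unfolding Rs_def using NR_fin by simp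
  show "\<forall>S\<in>Rs n M. one_rectangle n M S"
  proof
    fix S assume "S \<in> Rs n M"
    then obtain i a b where S: "S = stk n M i a b \<times> {a..<b}" and nr: "newrun n M i a b"
      unfolding Rs_def NR_def by auto
    have r: "run n M i a b" using nr unfolding newrun_def by simp
    obtain e where e: "i < e" "e \<le> n" "stk n M i a b = {i..<e}" using stk_interval[OF r] by blast
    have "\<forall>(x, y)\<in>S. M x y"
    proof
      fix z assume "z \<in> S"
      then obtain x y where z: "z = (x,y)" "x \<in> stk n M i a b" "a \<le> y" "y < b" using S by auto
      then have "run n M x a b" unfolding stk_def by auto
      then have "M x y" using z unfolding run_def by auto
      then show "case z of (x, y) \<Rightarrow> M x y" using z by simp
    qed
    moreover have "a < b" "b \<le> n" using r unfolding run_def by auto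
    ultimately show "one_rectangle n M S" unfolding one_rectangle_def using e S by blast
  qed
  show "pairwise disjnt (Rs n M)"
  proof (rule pairwiseI)
    fix S1 S2 assume S1: "S1 \<in> Rs n M" and S2: "S2 \<in> Rs n M" and ne: "S1 \<noteq> S2"
    obtain i a b where s1: "S1 = stk n M i a b \<times> {a..<b}" and n1: "newrun n M i a b"
      using S1 unfolding Rs_def NR_def by auto
    obtain i' a' b' where s2: "S2 = stk n M i' a' b' \<times> {a'..<b'}" and n2: "newrun n M i' a' b'"
      using S2 unfolding Rs_def NR_def by auto
    show "disjnt S1 S2"
    proof (rule ccontr)
      assume "\<not> disjnt S1 S2"
      then obtain r c where rc: "(r,c) \<in> S1" "(r,c) \<in> S2" unfolding disjnt_def by auto
      have st1: "r \<in> stk n M i a b" "a \<le> c" "c < b" using rc(1) s1 by auto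
      have st2: "r \<in> stk n M i' a' b'" "a' \<le> c" "c < b'" using rc(2) s2 by auto
      have ru1: "run n M r a b" using st1(1) unfolding stk_def by auto
      have ru2: "run n M r a' b'" using st2(1) unfolding stk_def by auto
      have ab: "a = a'" "b = b'" using run_unique[OF ru1 ru2 st1(2,3) st2(2,3)] by auto
      have "i = i'"
      proof (rule ccontr)
        assume "i \<noteq> i'"
        then consider "i < i'" | "i' < i" by linarith
        then show False
        proof cases
          case 1
          have "i' \<le> r" using st2(1) unfolding stk_def by simp
          moreover have "i \<le> i'-1" using 1 by simp
          ultimately have "run n M (i'-1) a b" using st1(1) unfolding stk_def by auto
          moreover have "\<not> run n M (i'-1) a' b'" using n2 1 unfolding newrun_def by auto
          ultimately show False using ab by simp
        next
          case 2
          have "i \<le> r" using st1(1) unfolding stk_def by simp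
          moreover have "i' \<le> i-1" using 2 by simp
          ultimately have "run n M (i-1) a' b'" using st2(1) unfolding stk_def by auto
          moreover have "\<not> run n M (i-1) a b" using n1 2 unfolding newrun_def by auto
          ultimately show False using ab by simp
        qed
      qed
      then show False using ne s1 s2 ab by simp
    qed
  qed
  show "\<Union> (Rs n M) = ones n M"
  proof
    show "\<Union> (Rs n M) \<subseteq> ones n M"
    proof
      fix z assume "z \<in> \<Union> (Rs n M)"
      then obtain i a b where z: "z \<in> stk n M i a b \<times> {a..<b}" unfolding Rs_def NR_def by auto
      then obtain x y where xy: "z = (x,y)" "x \<in> stk n M i a b" "a \<le> y" "y < b" by auto
      then have "run n M x a b" unfolding stk_def by auto
      then show "z \<in> ones n M" using xy unfolding run_def ones_def by auto
    qed
  next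
    show "ones n M \<subseteq> \<Union> (Rs n M)"
    proof
      fix z assume "z \<in> ones n M"
      then obtain r c where z: "z = (r,c)" "r < n" "c < n" "M r c" unfolding ones_def by auto
      obtain a b where ab: "run n M r a b" "a \<le> c" "c < b" using find_run[of r n c M] z(2,3,4) by blast
      define P where "P i = (i \<le> r \<and> (\<forall>r'. i \<le> r' \<and> r' \<le> r \<longrightarrow> run n M r' a b))" for i
      have Pr: "P r" using ab unfolding P_def by auto
      define i where "i = (LEAST i. P i)"
      have Pi: "P i" unfolding i_def using LeastI[of P, OF Pr] .
      have nr: "newrun n M i a b"
        unfolding newrun_def
      proof (intro conjI)
        show "run n M i a b" using Pi unfolding P_def by auto
        show "i = 0 \<or> \<not> run n M (i - 1) a b"
        proof (cases "i = 0")
          case False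
          have "\<not> P (i-1)" unfolding i_def by (rule not_less_Least) (use False i_def in simp)
          moreover have "P (i-1)" if ru: "run n M (i-1) a b"
            unfolding P_def
          proof (intro conjI allI impI)
            show "i - 1 \<le> r" using Pi unfolding P_def by auto
            fix r' assume r': "i - 1 \<le> r' \<and> r' \<le> r"
            show "run n M r' a b"
            proof (cases "r' = i - 1")
              case True then show ?thesis using ru by simp
            next
              case False
              then have "i \<le> r'" using r' by linarith
              then show ?thesis using Pi r' unfolding P_def by blast
            qed
          qed
          ultimately have "\<not> run n M (i-1) a b" by blast
          then show ?thesis by simp
        qed simp
      qed
      have "r \<in> stk n M i a b" using Pi unfolding P_def stk_def by auto
      then have "z \<in> stk n M i a b \<times> {a..<b}" using z ab by auto
      moreover have "(i,a,b) \<in> NR n M" using nr unfolding NR_def by simp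
      ultimately show "z \<in> \<Union> (Rs n M)" unfolding Rs_def by blast
    qed
  qed
qed


lemma ivt: "u \<le> v \<Longrightarrow> P u \<noteq> P v \<Longrightarrow> \<exists>j. u \<le> j \<and> j < v \<and> P j \<noteq> P (Suc j)"
proof (induction v)
  case 0 then show ?case by simp
next
  case (Suc v)
  show ?case
  proof (cases "P v = P (Suc v)")
    case True
    then have "u \<le> v" using Suc.prems by (metis le_SucE)
    then obtain j where "u \<le> j" "j < v" "P j \<noteq> P (Suc j)" using Suc True by auto
    then show ?thesis by (intro exI[of _ j]) auto
  next
    case False
    then have "u \<le> v" using Suc.prems by (metis le_SucE)
    then show ?thesis using False by (intro exI[of _ v]) auto
  qed
qed

lemma mixed_of:
  assumes "M r c \<noteq> M (Suc r) c" "c = j \<or> c = Suc j"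
    and "M r' j \<noteq> M r' (Suc j)" "r' = r \<or> r' = Suc r"
  shows "mixed M {r..<r+2} {j..<j+2}"
proof -
  have "\<not> horizontal M {r..<r+2} {j..<j+2}"
  proof
    assume H: "horizontal M {r..<r+2} {j..<j+2}"
    have mem: "r \<in> {r..<r+2}" "Suc r \<in> {r..<r+2}" "c \<in> {j..<j+2}" using assms(2) by auto
    have "\<forall>r1\<in>{r..<r+2}. \<forall>r2\<in>{r..<r+2}. \<forall>c\<in>{j..<j+2}. M r1 c = M r2 c"
      using H unfolding horizontal_def .
    then have "M r c = M (Suc r) c" using mem by blast
    then show False using assms(1) by simp
  qed
  moreover have "\<not> vertical M {r..<r+2} {j..<j+2}"
  proof
    assume V: "vertical M {r..<r+2} {j..<j+2}"
    have mem: "j \<in> {j..<j+2}" "Suc j \<in> {j..<j+2}" "r' \<in> {r..<r+2}" using assms(4) by auto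
    have "\<forall>c\<in>{j..<j+2}. \<forall>c'\<in>{j..<j+2}. \<forall>r\<in>{r..<r+2}. M r c = M r c'"
      using V unfolding vertical_def .
    then have "M r' j = M r' (Suc j)" using mem by blast
    then show False using assms(3) by simp
  qed
  ultimately show ?thesis unfolding mixed_def by simp
qed

lemma corner_exists:
  assumes nr: "newrun n M i a b" and i: "i \<noteq> 0" and nf: "\<not>(a = 0 \<and> b = n)"
  shows "\<exists>j. a \<le> j+1 \<and> j+1 \<le> b \<and> (i-1, j) \<in> Cor n M"
proof -
  obtain r where ri: "i = Suc r" using i by (cases i) auto
  have ru: "run n M (Suc r) a b" and nru: "\<not> run n M r a b" using nr ri unfolding newrun_def by auto
  have rn: "Suc r < n" and ab: "a < b" "b \<le> n" and ones: "\<And>c. a \<le> c \<Longrightarrow> c < b \<Longrightarrow> M (Suc r) c"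
    and la: "a = 0 \<or> \<not> M (Suc r) (a-1)" and lb: "b = n \<or> \<not> M (Suc r) b"
    using ru unfolding run_def by auto
  define D where "D c = (M r c \<noteq> M (Suc r) c)" for c
  have r2: "r + 2 \<le> n" using rn by simp
  have ex: "\<exists>c. c < n \<and> a \<le> c + 1 \<and> c \<le> b \<and> D c"
  proof (rule ccontr)
    assume "\<not> ?thesis"
    then have nd: "\<And>c. c < n \<Longrightarrow> a \<le> c + 1 \<Longrightarrow> c \<le> b \<Longrightarrow> M r c = M (Suc r) c" unfolding D_def by blast
    have "run n M r a b"
      unfolding run_def
    proof (intro conjI allI impI)
      show "r < n" using rn by simp
      show "a < b" "b \<le> n" using ab by auto
      fix c assume c: "a \<le> c \<and> c < b"
      then show "M r c" using nd[of c] ones[of c] ab by auto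
    next
      show "a = 0 \<or> \<not> M r (a-1)"
      proof (cases "a = 0")
        case False
        then have "M r (a-1) = M (Suc r) (a-1)" using nd[of "a-1"] ab by auto
        then show ?thesis using la by simp
      qed simp
    next
      show "b = n \<or> \<not> M r b"
      proof (cases "b = n")
        case False
        then have "M r b = M (Suc r) b" using nd[of b] ab by auto
        then show ?thesis using lb False by simp
      qed simp
    qed
    then show False using nru by simp
  qed
  show ?thesis
  proof (cases "0 < a \<and> (D (a-1) \<or> D a)")
    case True
    have c1: "M (Suc r) (a-1) \<noteq> M (Suc r) (Suc (a-1))" using True la ones[of a] ab by auto
    obtain c where "c = a - 1 \<or> c = Suc (a-1)" "M r c \<noteq> M (Suc r) c"
      using True unfolding D_def by (metis Suc_pred')
    then have "mixed M {r..<r+2} {a-1..<a-1+2}" using mixed_of c1 by blast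
    moreover have "a - 1 + 2 \<le> n" using ab True by linarith
    ultimately have "(r, a-1) \<in> Cor n M" unfolding Cor_def using r2 by simp
    then show ?thesis using ri True ab by (intro exI[of _ "a-1"]) auto
  next
    case notA: False
    show ?thesis
    proof (cases "b < n \<and> (D (b-1) \<or> D b)")
      case True
      have b1: "Suc (b-1) = b" using ab by simp
      have c1: "M (Suc r) (b-1) \<noteq> M (Suc r) (Suc (b-1))" using True lb ones[of "b-1"] ab b1 by auto
      obtain c where "c = b - 1 \<or> c = Suc (b-1)" "M r c \<noteq> M (Suc r) c"
        using True b1 unfolding D_def by metis
      then have "mixed M {r..<r+2} {b-1..<b-1+2}" using mixed_of c1 by blast
      moreover have "b - 1 + 2 \<le> n" using ab True by linarith
      ultimately have "(r, b-1) \<in> Cor n M" unfolding Cor_def using r2 by simp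
      then show ?thesis using ri True ab by (intro exI[of _ "b-1"]) auto
    next
      case notB: False
      obtain c where c: "c < n" "a \<le> c + 1" "c \<le> b" "D c" using ex by blast
      have ca: "a \<le> c"
      proof (rule ccontr)
        assume "\<not> a \<le> c"
        then have "c = a - 1" "0 < a" using c by auto
        then show False using notA c(4) by auto
      qed
      have cb: "c < b"
      proof (rule ccontr)
        assume "\<not> c < b"
        then have "c = b" using c by simp
        then show False using notB c by auto
      qed
      obtain e where e: "a \<le> e" "e < b" "\<not> D e"
      proof (cases "0 < a")
        case True
        then show ?thesis using that[of a] notA ab by auto
      next
        case False
        then have "b < n" using nf ab by auto
        then show ?thesis using that[of "b-1"] notB ab by auto
      qed
      obtain j where j: "min c e \<le> j" "j < max c e" "D j \<noteq> D (Suc j)"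
        using ivt[of "min c e" "max c e" D] c(4) e(3)
        by (cases "c \<le> e") (auto simp: min_def max_def)
      have ja: "a \<le> j" using j(1) ca e(1) by simp
      have jb: "Suc j < b" using j(2) cb e(2) by simp
      have o1: "M (Suc r) j" "M (Suc r) (Suc j)" using ja jb ones by auto
      have nh: "\<exists>c'. (c' = j \<or> c' = Suc j) \<and> M r c' \<noteq> M (Suc r) c'" using j(3) unfolding D_def by blast
      have nv: "M r j \<noteq> M r (Suc j)" using j(3) o1 unfolding D_def by auto
      have "mixed M {r..<r+2} {j..<j+2}" using nh nv mixed_of by blast
      moreover have "j + 2 \<le> n" using jb ab by linarith
      ultimately have "(r, j) \<in> Cor n M" unfolding Cor_def using r2 by simp
      then show ?thesis using ri ja jb by (intro exI[of _ j]) auto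
    qed
  qed
qed


lemma NR_card: "card (NR n M) \<le> n + n + card (Cor n M)"
proof -
  define N0 where "N0 = {x \<in> NR n M. fst x = 0}"
  define NF where "NF = {x \<in> NR n M. fst (snd x) = 0 \<and> snd (snd x) = n}"
  define NC where "NC = {x \<in> NR n M. fst x \<noteq> 0 \<and> \<not>(fst (snd x) = 0 \<and> snd (snd x) = n)}"
  have un: "NR n M = N0 \<union> NF \<union> NC" unfolding N0_def NF_def NC_def by auto
  have fin: "finite N0" "finite NF" "finite NC" unfolding N0_def NF_def NC_def using NR_fin by auto
  have c0: "card N0 \<le> n"
  proof -
    have inj: "inj_on (\<lambda>x. fst (snd x)) N0"
    proof (rule inj_onI)
      fix x y assume x: "x \<in> N0" and y: "y \<in> N0" and e: "fst (snd x) = fst (snd y)"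
      obtain a b where xa: "x = (0,a,b)" "run n M 0 a b" using x unfolding N0_def NR_def newrun_def by auto
      obtain a' b' where ya: "y = (0,a',b')" "run n M 0 a' b'" using y unfolding N0_def NR_def newrun_def by auto
      have "a = a'" using e xa ya by simp
      moreover have "a \<le> a" "a < b" "a' \<le> a" "a < b'" using xa ya \<open>a = a'\<close> unfolding run_def by auto
      ultimately have "b = b'" using run_unique[OF xa(2) ya(2)] by blast
      then show "x = y" using xa ya \<open>a = a'\<close> by simp
    qed
    have "(\<lambda>x. fst (snd x)) ` N0 \<subseteq> {..<n}" unfolding N0_def NR_def newrun_def run_def by auto
    then have "card ((\<lambda>x. fst (snd x)) ` N0) \<le> n" by (metis card_lessThan card_mono finite_lessThan)
    then show ?thesis using card_image[OF inj] by simp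
  qed
  have cF: "card NF \<le> n"
  proof -
    have inj: "inj_on fst NF" by (rule inj_onI) (auto simp: NF_def prod_eq_iff)
    have "fst ` NF \<subseteq> {..<n}" unfolding NF_def NR_def newrun_def run_def by auto
    then have "card (fst ` NF) \<le> n" by (metis card_lessThan card_mono finite_lessThan)
    then show ?thesis using card_image[OF inj] by simp
  qed
  have cC: "card NC \<le> card (Cor n M)"
  proof -
    define g where "g x = (fst x - 1, SOME j. fst (snd x) \<le> j+1 \<and> j+1 \<le> snd (snd x) \<and> (fst x - 1, j) \<in> Cor n M)" for x
    have gp: "fst (snd x) \<le> snd (g x) + 1 \<and> snd (g x) + 1 \<le> snd (snd x) \<and> g x \<in> Cor n M" if "x \<in> NC" for x
    proof -
      obtain i a b where x: "x = (i,a,b)" by (cases x)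
      have "newrun n M i a b" "i \<noteq> 0" "\<not>(a = 0 \<and> b = n)" using that x unfolding NC_def NR_def by auto
      then have "\<exists>j. a \<le> j+1 \<and> j+1 \<le> b \<and> (i-1, j) \<in> Cor n M" by (rule corner_exists)
      then have "a \<le> (SOME j. a \<le> j+1 \<and> j+1 \<le> b \<and> (i-1, j) \<in> Cor n M) + 1
          \<and> (SOME j. a \<le> j+1 \<and> j+1 \<le> b \<and> (i-1, j) \<in> Cor n M) + 1 \<le> b
          \<and> (i-1, SOME j. a \<le> j+1 \<and> j+1 \<le> b \<and> (i-1, j) \<in> Cor n M) \<in> Cor n M"
        by (rule someI_ex)
      then show ?thesis unfolding g_def x by simp
    qed
    have inj: "inj_on g NC"
    proof (rule inj_onI)
      fix x y assume x: "x \<in> NC" and y: "y \<in> NC" and e: "g x = g y"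
      obtain i a b where xa: "x = (i,a,b)" by (cases x)
      obtain i' a' b' where ya: "y = (i',a',b')" by (cases y)
      have nx: "newrun n M i a b" "i \<noteq> 0" using x xa unfolding NC_def NR_def by auto
      have ny: "newrun n M i' a' b'" "i' \<noteq> 0" using y ya unfolding NC_def NR_def by auto
      have "i - 1 = i' - 1" using e xa ya unfolding g_def by simp
      then have ii: "i = i'" using nx(2) ny(2) by simp
      have jj: "snd (g x) = snd (g y)" using e by simp
      have gx: "a \<le> snd (g x) + 1" "snd (g x) + 1 \<le> b" using gp[OF x] xa by auto
      have gy: "a' \<le> snd (g x) + 1" "snd (g x) + 1 \<le> b'" using gp[OF y] ya jj by auto
      have r1: "run n M i a b" and r2: "run n M i a' b'" using nx ny ii unfolding newrun_def by auto
      have "(a = a' \<and> b = b') \<or> b < a' \<or> b' < a" by (rule run_sep[OF r1 r2])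
      then have "a = a' \<and> b = b'" using gx gy by auto
      then show "x = y" using xa ya ii by simp
    qed
    have sub: "g ` NC \<subseteq> Cor n M" using gp by auto
    have finC: "finite (Cor n M)" unfolding Cor_def
      by (rule finite_subset[of _ "{..<n} \<times> {..<n}"]) auto
    have "card NC = card (g ` NC)" using card_image[OF inj] by simp
    also have "\<dots> \<le> card (Cor n M)" by (rule card_mono[OF finC sub])
    finally show ?thesis .
  qed
  have "card (NR n M) \<le> card (N0 \<union> NF) + card NC" unfolding un by (rule card_Un_le)
  also have "\<dots> \<le> card N0 + card NF + card NC" using card_Un_le[of N0 NF] by simp
  finally show ?thesis using c0 cF cC by linarith
qed

lemma const_bound:
  assumes d: "1 \<le> d"
  shows "2 + 4 * (4 * (d * 4^(12*d+5)) * 2^(4*d+4) * 2^(4*d+4)) \<le> (2::nat)^(56*d)"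
proof -
  have dd: "d \<le> 2^d" using less_exp[of d] by simp
  have e4: "(4::nat)^(12*d+5) = 2^(24*d+10)"
  proof -
    have "(4::nat)^(12*d+5) = (2^2)^(12*d+5)" by simp
    also have "\<dots> = 2^(2*(12*d+5))" by (rule power_mult[symmetric])
    also have "2*(12*d+5) = 24*d+10" by simp
    finally show ?thesis .
  qed
  have "4 * (4 * (d * 4^(12*d+5)) * 2^(4*d+4) * 2^(4*d+4)) = 16 * d * (4::nat)^(12*d+5) * 2^(4*d+4) * 2^(4*d+4)"
    by (simp add: algebra_simps)
  also have "\<dots> \<le> 16 * 2^d * (4::nat)^(12*d+5) * 2^(4*d+4) * 2^(4*d+4)" using dd by simp
  also have "\<dots> = (2::nat)^4 * 2^d * 2^(24*d+10) * 2^(4*d+4) * 2^(4*d+4)" unfolding e4 by simp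
  also have "\<dots> = 2^(4 + d + (24*d+10) + (4*d+4) + (4*d+4))" by (simp only: power_add)
  also have "4 + d + (24*d+10) + (4*d+4) + (4*d+4) = 33*d + 22" by simp
  finally have A: "4 * (4 * (d * 4^(12*d+5)) * 2^(4*d+4) * 2^(4*d+4)) \<le> (2::nat)^(33*d+22)" .
  have B: "(2::nat) \<le> 2^(33*d+22)" using power_increasing[of 1 "33*d+22" "2::nat"] by simp
  have "2 + 4 * (4 * (d * 4^(12*d+5)) * 2^(4*d+4) * 2^(4*d+4)) \<le> 2^(33*d+22) + (2::nat)^(33*d+22)"
    using A B by linarith
  also have "\<dots> = 2^(33*d+23)" by (simp add: power_add)
  also have "\<dots> \<le> 2^(56*d)" using d by (intro power_increasing) auto
  finally show ?thesis .
qed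

theorem lemma6:
  "\<exists>C::nat. \<forall>d n. \<forall>M :: nat \<Rightarrow> nat \<Rightarrow> bool.
     d \<ge> 1 \<longrightarrow> mixed_free n d M \<longrightarrow>
     (\<exists>R. rectangle_decomposition n M R \<and> card R \<le> 2 ^ (C * d) * n)"
proof (intro exI[of _ 56] allI impI)
  fix d n :: nat and M :: "nat \<Rightarrow> nat \<Rightarrow> bool"
  assume d: "d \<ge> 1" and mf: "mixed_free n d M"
  let ?E = "(4 * (d * 4^(12*d+5)) * 2^(4*d+4)) * 2^(4*d+4)"
  have "card (Rs n M) \<le> card (NR n M)" unfolding Rs_def using NR_fin by (rule card_image_le)
  also have "\<dots> \<le> n + n + card (Cor n M)" by (rule NR_card)
  also have "\<dots> \<le> n + n + 4 * (?E * n)" using Cor_card[OF d mf] by simp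
  also have "\<dots> = (2 + 4 * ?E) * n" by (simp add: algebra_simps)
  also have "\<dots> \<le> 2^(56*d) * n" using const_bound[OF d] by (rule mult_right_mono) simp
  finally show "\<exists>R. rectangle_decomposition n M R \<and> card R \<le> 2 ^ (56 * d) * n"
    using Rs_decomp by blast
qed


end
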